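(* If $f:\subseteq\mathbf R^m\to\mathbf R^m$ is real recursive, then there is a real recursive function $g:\subseteq\mathbf R^{m+1}\to\mathbf R^m$ extending the function $g'$ defined by $\operatorname{dom} g'=\{(\vec v,k)\in\mathbf R^m\times(\mathbf N\setminus\{0\})\mid \vec v\in\operatorname{dom} f^k\}$ and $g'(\vec v,k)=f^k\vec v$, where $f^k=f\circ\dots\circ f$ ($k$ times); i.e. $(\vec v,k)\in\operatorname{dom} g$ and $g(\vec v,k)=f^k\vec v$ whenever $(\vec v,k)\in\operatorname{dom} g'$.
   Context: Functions may be partial: $f:\subseteq\mathbf R^m\to\mathbf R^n$ has domain $\operatorname{dom} f\subseteq\mathbf R^m$; $\mathbf R^0$ is a one-point space. Juxtaposition: $[g_0,\dots,g_{n-1}]\vec x=(g_0\vec x,\dots,g_{n-1}\vec x)$, defined exactly when $\vec x\in\bigcap_j\operatorname{dom} g_j$. Composition: $(f\circ g)\vec x=f(g\vec x)$, defined exactly when $\vec x\in\operatorname{dom} g$ and $g\vec x\in\operatorname{dom} f$. Differential recursion: for $f:\subseteq\mathbf R^m\to\mathbf R^n$, $g:\subseteq\mathbf R^{m+1+n}\to\mathbf R^n$ and $\vec v\in\mathbf R^m$, let $H_{\vec v}$ be the set of all $h:\subseteq\mathbf R\to\mathbf R^n$ such that (1) $\operatorname{dom} h$ is empty or a (possibly unbounded) interval containing $0$; (2) $\vec v\in\operatorname{dom} f$ if $\operatorname{dom} h\ne\emptyset$; (3) $(\vec v,\tau,h\tau)\in\operatorname{dom} g$ for every $\tau\in\operatorname{dom}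 h$; (4) $h t=f\vec v+\int_0^t g(\vec v,\tau,h\tau)\,d\tau$ for every $t\in\operatorname{dom} h$. A function $h\in H$ is unique in a set $H$ if for every $h'\in H$, $h'$ and $h$ agree on $\operatorname{dom} h\cap\operatorname{dom} h'$. Let $K_{\vec v}$ be the set of functions unique in $H_{\vec v}$ (these agree on common domains) and let $h_{\vec v}$ be their union. Define $\mathrm{PR}(f,g):\subseteq\mathbf R^{m+1}\to\mathbf R^n$ by $\operatorname{dom}\mathrm{PR}(f,g)=\{(\vec v,t)\mid t\in\operatorname{dom} h_{\vec v}\}$ and $\mathrm{PR}(f,g)(\vec v,t)=h_{\vec v}t$. The class of real primitive recursive functions is the smallest class containing the nullary functions with values $0$, $1$, $-1$ and closed under juxtaposition, composition and $\mathrm{PR}$. Minimization: for $f:\subseteq\mathbf R^{m+1}\to\mathbf R$ and $\vec v\in\mathbf R^m$, say $t^+$ is defined if there is $t\ge0$ with $(\vec v,t)\in\operatorname{dom} f$, $f(\vec v,t)=0$ and $(\vec v,\tau)\in\operatorname{dom} f$ for all $\tau\in[-t,t]$, in which case $t^+=\inf\{t\ge0\mid (\vec v,t)\in\operatorname{dom} f,\ f(\vec v,t)=0\}$; symmetrically $t^-$ is defined if there is $t\le0$ with $f(\vec v,t)=0$ and $(\vec v,\tau)\in\operatorname{dom} f$ for all $\tau\in[t,-t]$, in which case $t^-=\sup\{t\le0\mid (\vec v,t)\in\operatorname{dom} f,\ f(\vec v,t)=0\}$. Then $\mathrm{MN}f\,\vec v$ is defined iff at least one of $t^+,t^-$ is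 defined; if only one is defined it is the value; if both are, the value is $t^+$ when $t^+<-t^-$ and $t^-$ otherwise. The class of real recursive functions is the smallest class containing all real primitive recursive functions and closed under juxtaposition, composition, $\mathrm{PR}$ and $\mathrm{MN}$. *)

theory Defs
  imports "HOL-Analysis.Analysis"
begin

text \<open>A partial function from R^m to R^n is modelled as a map from real lists to
  optional real lists; its arity (m,n) is tracked by the inductive predicates below,
  and all constructions only produce maps whose domain consists of lists of length m
  and whose values are lists of length n.\<close>

type_synonym pfun = "real list \<Rightarrow> real list option"

definition pdom :: "pfun \<Rightarrow> real list set" where
  "pdom f = {x. f x \<noteq> None}"

definition const0 :: "real \<Rightarrow> pfun" where
  "const0 c xs = (if xs = [] then Some [c] else None)"

definition juxt :: "nat \<Rightarrow> pfun list \<Rightarrow> pfun" where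
  "juxt m gs xs = (if length xs = m \<and> (\<forall>g\<in>set gs. g xs \<noteq> None)
      then Some (map (\<lambda>g. hd (the (g xs))) gs) else None)"

definition pcomp :: "pfun \<Rightarrow> pfun \<Rightarrow> pfun" where
  "pcomp f g xs = (case g xs of None \<Rightarrow> None | Some y \<Rightarrow> f y)"

definition PR_H :: "nat \<Rightarrow> pfun \<Rightarrow> pfun \<Rightarrow> real list \<Rightarrow> (real \<Rightarrow> real list option) set" where
  "PR_H n f g v = {h.
     (dom h = {} \<or> (is_interval (dom h) \<and> 0 \<in> dom h)) \<and>
     (dom h \<noteq> {} \<longrightarrow> v \<in> pdom f) \<and>
     (\<forall>\<tau>\<in>dom h. length (the (h \<tau>)) = n \<and> v @ [\<tau>] @ the (h \<tau>) \<in> pdom g) \<and>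
     (\<forall>t\<in>dom h. \<forall>i<n.
        (0 \<le> t \<longrightarrow> ((\<lambda>\<tau>. the (g (v @ [\<tau>] @ the (h \<tau>))) ! i)
                        has_integral (the (h t) ! i - the (f v) ! i)) {0..t}) \<and>
        (t < 0 \<longrightarrow> ((\<lambda>\<tau>. the (g (v @ [\<tau>] @ the (h \<tau>))) ! i)
                        has_integral (the (f v) ! i - the (h t) ! i)) {t..0}))}"

definition unique_in :: "(real \<Rightarrow> real list option) \<Rightarrow> (real \<Rightarrow> real list option) set \<Rightarrow> bool" where
  "unique_in h H \<longleftrightarrow> h \<in> H \<and> (\<forall>h'\<in>H. \<forall>t\<in>dom h \<inter> dom h'. h t = h' t)"

text \<open>PR(f,g) for f :\<subseteq> R^m \<rightarrow> R^n, g :\<subseteq> R^(m+1+n) \<rightarrow> R^n; h_v is the union of the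
  functions unique in H_v.\<close>
definition PRop :: "nat \<Rightarrow> nat \<Rightarrow> pfun \<Rightarrow> pfun \<Rightarrow> pfun" where
  "PRop m n f g xs =
     (if length xs = m + 1 then
        (let v = butlast xs; t = last xs in
          if \<exists>h. unique_in h (PR_H n f g v) \<and> t \<in> dom h
          then (SOME h. unique_in h (PR_H n f g v) \<and> t \<in> dom h) t
          else None)
      else None)"

definition tplus_def :: "pfun \<Rightarrow> real list \<Rightarrow> bool" where
  "tplus_def f v \<longleftrightarrow> (\<exists>t\<ge>0. f (v @ [t]) = Some [0] \<and> (\<forall>\<tau>\<in>{-t..t}. v @ [\<tau>] \<in> pdom f))"

definition tplus :: "pfun \<Rightarrow> real list \<Rightarrow> real" where
  "tplus f v = Inf {t. t \<ge> 0 \<and> f (v @ [t]) = Some [0]}"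

definition tminus_def :: "pfun \<Rightarrow> real list \<Rightarrow> bool" where
  "tminus_def f v \<longleftrightarrow> (\<exists>t\<le>0. f (v @ [t]) = Some [0] \<and> (\<forall>\<tau>\<in>{t..-t}. v @ [\<tau>] \<in> pdom f))"

definition tminus :: "pfun \<Rightarrow> real list \<Rightarrow> real" where
  "tminus f v = Sup {t. t \<le> 0 \<and> f (v @ [t]) = Some [0]}"

definition MNop :: "nat \<Rightarrow> pfun \<Rightarrow> pfun" where
  "MNop m f v =
     (if length v \<noteq> m then None
      else if tplus_def f v \<and> tminus_def f v then
        (if tplus f v < - tminus f v then Some [tplus f v] else Some [tminus f v])
      else if tplus_def f v then Some [tplus f v]
      else if tminus_def f v then Some [tminus f v]
      else None)"

inductive rprim :: "nat \<Rightarrow> nat \<Rightarrow> pfun \<Rightarrow> bool" where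
  rp_zero: "rprim 0 1 (const0 0)"
| rp_one: "rprim 0 1 (const0 1)"
| rp_mone: "rprim 0 1 (const0 (-1))"
| rp_juxt: "(\<forall>g\<in>set gs. rprim m 1 g) \<Longrightarrow> rprim m (length gs) (juxt m gs)"
| rp_comp: "rprim k n f \<Longrightarrow> rprim m k g \<Longrightarrow> rprim m n (pcomp f g)"
| rp_PR: "rprim m n f \<Longrightarrow> rprim (m + 1 + n) n g \<Longrightarrow> rprim (m + 1) n (PRop m n f g)"

inductive rrec :: "nat \<Rightarrow> nat \<Rightarrow> pfun \<Rightarrow> bool" where
  rr_prim: "rprim m n f \<Longrightarrow> rrec m n f"
| rr_juxt: "(\<forall>g\<in>set gs. rrec m 1 g) \<Longrightarrow> rrec m (length gs) (juxt m gs)"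
| rr_comp: "rrec k n f \<Longrightarrow> rrec m k g \<Longrightarrow> rrec m n (pcomp f g)"
| rr_PR: "rrec m n f \<Longrightarrow> rrec (m + 1 + n) n g \<Longrightarrow> rrec (m + 1) n (PRop m n f g)"
| rr_MN: "rrec (m + 1) 1 f \<Longrightarrow> rrec m 1 (MNop m f)"

primrec piter :: "pfun \<Rightarrow> nat \<Rightarrow> pfun" where
  "piter f 0 = Some"
| "piter f (Suc k) = (\<lambda>v. Option.bind (piter f k v) f)"

end

theory Submission
  imports Defs
begin


lemma PRop_arity: "PRop m n f g xs = Some ys \<Longrightarrow> length xs = m + 1 \<and> length ys = n"
proof -
  assume a: "PRop m n f g xs = Some ys"
  let ?P = "\<lambda>h. unique_in h (PR_H n f g (butlast xs)) \<and> last xs \<in> dom h"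
  have l: "length xs = m + 1" and ex: "\<exists>h. ?P h" using a unfolding PRop_def Let_def by (auto split: if_splits)
  have P: "?P (SOME h. ?P h)" by (rule someI_ex[OF ex])
  have "(SOME h. ?P h) (last xs) = Some ys" using a l ex unfolding PRop_def Let_def by simp
  then have "(SOME h. ?P h) \<in> PR_H n f g (butlast xs)" "last xs \<in> dom (SOME h. ?P h)" using P unfolding unique_in_def by auto
  then have "length (the ((SOME h. ?P h) (last xs))) = n" unfolding PR_H_def by blast
  then show ?thesis using l \<open>(SOME h. ?P h) (last xs) = Some ys\<close> by simp
qed

lemma rrec_arity: "rrec m n f \<Longrightarrow> f xs = Some ys \<Longrightarrow> length xs = m \<and> length ys = n"
proof (induction arbitrary: xs ys rule: rrec.induct)
  case (rr_prim m n f)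
  then show ?case
  proof (induction arbitrary: xs ys rule: rprim.induct)
    case (rp_PR m n f g)
    then show ?case by (blast dest: PRop_arity)
    next
    case (rp_comp k n f m g)
    then show ?case by (cases "g xs") (auto simp: pcomp_def)
  next
    case (rp_juxt gs m)
    then show ?case by (auto simp: juxt_def split: if_splits)
  qed (auto simp: const0_def split: if_splits)
next
  case (rr_PR m n f g)
  then show ?case by (blast dest: PRop_arity)
next
  case (rr_MN m f)
  then show ?case by (auto simp: MNop_def split: if_splits)
next
  case (rr_comp k n f m g)
  then show ?case by (cases "g xs") (auto simp: pcomp_def)
next
  case (rr_juxt gs m)
  then show ?case by (auto simp: juxt_def split: if_splits)
qed

definition tot :: "nat \<Rightarrow> (real list \<Rightarrow> real) \<Rightarrow> bool" where
  "tot n \<phi> \<longleftrightarrow> (\<exists>S. rrec n 1 S \<and> (\<forall>xs. length xs = n \<longrightarrow> S xs = Some [\<phi> xs]))"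

lemma tot_const0:
  assumes "c = 0 \<or> c = 1 \<or> c = -1" shows "tot 0 (\<lambda>_. c)"
proof -
  have "rrec 0 1 (const0 c)" using assms rr_prim[OF rp_zero] rr_prim[OF rp_one] rr_prim[OF rp_mone] by auto
  then show ?thesis unfolding tot_def by (auto simp: const0_def intro!: exI[of _ "const0 c"])
qed

lemma tot_lift0: assumes "tot 0 \<phi>" shows "tot n (\<lambda>_. \<phi> [])"
proof -
  obtain S where S: "rrec 0 1 S" "S [] = Some [\<phi> []]" using assms unfolding tot_def by auto
  have j: "rrec n 0 (juxt n [])" using rr_juxt[of "[]" n] by simp
  show ?thesis unfolding tot_def
    by (rule exI[of _ "pcomp S (juxt n [])"], rule conjI, rule rr_comp[OF S(1) j]) (auto simp: pcomp_def juxt_def S(2))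
qed

lemma PRop_eval:
  assumes "length v = m" "unique_in h (PR_H n f g v)" "t \<in> dom h"
  shows "PRop m n f g (v @ [t]) = h t"
proof -
  let ?P = "\<lambda>h. unique_in h (PR_H n f g v) \<and> t \<in> dom h"
  have ex: "\<exists>h. ?P h" using assms by blast
  have "?P (SOME h. ?P h)" by (rule someI_ex[OF ex])
  then have "h t = (SOME h. ?P h) t" using assms(2,3) unfolding unique_in_def by blast
  then show ?thesis using assms(1) unfolding PRop_def by (simp add: ex)
qed

lemma H_interval:
  assumes "h \<in> PR_H n f g v" "t \<in> dom h" "min 0 t \<le> \<tau>" "\<tau> \<le> max 0 t"
  shows "\<tau> \<in> dom h"
proof -
  have "is_interval (dom h)" "0 \<in> dom h" using assms(1,2) unfolding PR_H_def by auto
  then show ?thesis using assms(2-4) unfolding is_interval_1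
    by (metis max_def min_def)
qed

lemma PR_lin:
  assumes "tot n \<phi>" "tot (n+2) \<psi>" "\<And>v \<tau> y. length v = n \<Longrightarrow> \<psi> (v @ [\<tau>, y]) = c v"
  shows "tot (n+1) (\<lambda>xs. \<phi> (butlast xs) + c (butlast xs) * last xs)"
proof -
  obtain Sf where Sf: "rrec n 1 Sf" "\<And>xs. length xs = n \<Longrightarrow> Sf xs = Some [\<phi> xs]" using assms(1) unfolding tot_def by auto
  obtain Sg where Sg: "rrec (n+2) 1 Sg" "\<And>xs. length xs = n+2 \<Longrightarrow> Sg xs = Some [\<psi> xs]" using assms(2) unfolding tot_def by auto
  have r: "rrec (n+1) 1 (PRop n 1 Sf Sg)" using rr_PR[OF Sf(1)] Sg(1) by (simp add: numeral_2_eq_2)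
  have val: "PRop n 1 Sf Sg (v @ [t]) = Some [\<phi> v + c v * t]" if lv: "length v = n" for v t
  proof -
    let ?h = "\<lambda>\<tau>::real. Some [\<phi> v + c v * \<tau>]"
    have gval: "Sg (v @ [\<tau>, y]) = Some [c v]" for \<tau> y using Sg(2)[of "v @ [\<tau>, y]"] assms(3)[OF lv] lv by simp
    have inH: "?h \<in> PR_H 1 Sf Sg v"
      unfolding PR_H_def
    proof (intro CollectI conjI ballI allI impI)
      show "dom ?h = {} \<or> is_interval (dom ?h) \<and> 0 \<in> dom ?h" by (auto simp: dom_def is_interval_1)
      show "v \<in> pdom Sf" if "dom ?h \<noteq> {}" using Sf(2)[OF lv] by (simp add: pdom_def)
      fix \<tau> assume "\<tau> \<in> dom ?h"
      show "length (the (?h \<tau>)) = 1" by simp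
      show "v @ [\<tau>] @ the (?h \<tau>) \<in> pdom Sg" using gval by (simp add: pdom_def)
    next
      fix t' i assume "t' \<in> dom ?h" "i < (1::nat)" 
      then have i: "i = 0" by simp
      { assume "0 \<le> t'"
        have "((\<lambda>x. c v) has_integral (t' * c v)) {0..t'}" using has_integral_const_real[of "c v" 0 t'] \<open>0 \<le> t'\<close> by simp
        then show "((\<lambda>\<tau>. the (Sg (v @ [\<tau>] @ the (?h \<tau>))) ! i) has_integral the (?h t') ! i - the (Sf v) ! i) {0..t'}"
          using \<open>0 \<le> t'\<close> by (simp add: i gval Sf(2)[OF lv] mult.commute) }
      { assume "t' < 0"
        have "((\<lambda>x. c v) has_integral ((0 - t') * c v)) {t'..0}" using has_integral_const_real[of "c v" t' 0] \<open>t' < 0\<close> by simp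
        then show "((\<lambda>\<tau>. the (Sg (v @ [\<tau>] @ the (?h \<tau>))) ! i) has_integral the (Sf v) ! i - the (?h t') ! i) {t'..0}"
          using \<open>t' < 0\<close> by (simp add: i gval Sf(2)[OF lv] algebra_simps) }
    qed
    have uq: "?h t'' = h' t''" if h': "h' \<in> PR_H 1 Sf Sg v" and t'': "t'' \<in> dom h'" for h' t''
    proof -
      have len: "length (the (h' \<tau>)) = 1" if "\<tau> \<in> dom h'" for \<tau> using h' that unfolding PR_H_def by auto
      have intg: "the (Sg (v @ [\<tau>] @ the (h' \<tau>))) ! 0 = c v" if tau: "\<tau> \<in> dom h'" for \<tau>
      proof -
        obtain y where "the (h' \<tau>) = [y]" using len[OF tau] by (cases "the (h' \<tau>)") auto
        then show ?thesis using gval by simp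
      qed
      have "the (h' t'') ! 0 = \<phi> v + c v * t''"
      proof (cases "0 \<le> t''")
        case True
        then have "((\<lambda>\<tau>. the (Sg (v @ [\<tau>] @ the (h' \<tau>))) ! 0) has_integral the (h' t'') ! 0 - the (Sf v) ! 0) {0..t''}"
          using h' t'' unfolding PR_H_def by auto
        moreover have "\<tau> \<in> {0..t''} \<Longrightarrow> \<tau> \<in> dom h'" for \<tau> using H_interval[OF h' t''] by auto
        ultimately have "((\<lambda>\<tau>. c v) has_integral the (h' t'') ! 0 - \<phi> v) {0..t''}"
          using Sf(2)[OF lv] intg has_integral_cong[of "{_.._}" "\<lambda>\<tau>. the (Sg (v @ [\<tau>] @ the (h' \<tau>))) ! 0" "\<lambda>_. c v"] by simp
        moreover have "((\<lambda>x. c v) has_integral (t'' * c v)) {0..t''}" using has_integral_const_real[of "c v" 0 t''] True by simp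
        ultimately have "the (h' t'') ! 0 - \<phi> v = t'' * c v" using has_integral_unique by blast
        then show ?thesis using True by (simp add: algebra_simps)
      next
        case False
        then have "((\<lambda>\<tau>. the (Sg (v @ [\<tau>] @ the (h' \<tau>))) ! 0) has_integral the (Sf v) ! 0 - the (h' t'') ! 0) {t''..0}"
          using h' t'' unfolding PR_H_def by auto
        moreover have "\<tau> \<in> {t''..0} \<Longrightarrow> \<tau> \<in> dom h'" for \<tau> using H_interval[OF h' t''] by auto
        ultimately have "((\<lambda>\<tau>. c v) has_integral \<phi> v - the (h' t'') ! 0) {t''..0}"
          using Sf(2)[OF lv] intg has_integral_cong[of "{_.._}" "\<lambda>\<tau>. the (Sg (v @ [\<tau>] @ the (h' \<tau>))) ! 0" "\<lambda>_. c v"] by simp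
        moreover have "((\<lambda>x. c v) has_integral ((0 - t'') * c v)) {t''..0}" using has_integral_const_real[of "c v" t'' 0] False by simp
        ultimately have "\<phi> v - the (h' t'') ! 0 = (0 - t'') * c v" using has_integral_unique by blast
        then show ?thesis using False by (simp add: algebra_simps)
      qed
      moreover obtain y where "the (h' t'') = [y]" using len[OF t''] by (cases "the (h' t'')") auto
      moreover have "h' t'' = Some (the (h' t''))" using t'' by auto
      ultimately show ?thesis by simp
    qed
    have "unique_in ?h (PR_H 1 Sf Sg v)" unfolding unique_in_def using inH uq by blast
    then show ?thesis using PRop_eval[OF lv, of ?h] by simp
  qed
  show ?thesis unfolding tot_def
  proof (intro exI conjI allI impI)
    show "rrec (n+1) 1 (PRop n 1 Sf Sg)" by (rule r)
    fix xs :: "real list" assume l: "length xs = n + 1"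
    then have "xs \<noteq> []" by auto
    then have "xs = butlast xs @ [last xs]" by simp
    moreover have "length (butlast xs) = n" using l by simp
    ultimately show "PRop n 1 Sf Sg xs = Some [\<phi> (butlast xs) + c (butlast xs) * last xs]"
      using val by metis
  qed
qed


lemma tot_cong: "tot n \<phi> \<Longrightarrow> (\<And>xs. length xs = n \<Longrightarrow> \<phi> xs = \<psi> xs) \<Longrightarrow> tot n \<psi>"
  unfolding tot_def by metis

lemma tot_cong': "tot n \<phi> \<Longrightarrow> n = n' \<Longrightarrow> (\<And>xs. length xs = n \<Longrightarrow> \<phi> xs = \<psi> xs) \<Longrightarrow> tot n' \<psi>"
  unfolding tot_def by metis

lemma last_len: "length xs = Suc n \<Longrightarrow> last xs = xs ! n"
  by (cases xs rule: rev_cases) auto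

lemma tot_const: "c = 0 \<or> c = 1 \<or> c = -1 \<Longrightarrow> tot n (\<lambda>_. c)"
  using tot_lift0[OF tot_const0] by blast

lemma tot_proj: "i < n \<Longrightarrow> tot n (\<lambda>xs. xs ! i)"
proof (induction n arbitrary: i)
  case 0 then show ?case by simp
next
  case (Suc n)
  show ?case
  proof (cases "i = n")
    case True
    have "tot (n+1) (\<lambda>xs. (\<lambda>_. 0) (butlast xs) + (\<lambda>_. 1) (butlast xs) * last xs)"
      by (rule PR_lin[OF tot_const tot_const]) auto
    then show ?thesis
      by (rule tot_cong') (auto simp: True last_len)
  next
    case False
    then have i: "i < n" using Suc by simp
    have "tot (n+1) (\<lambda>xs. (\<lambda>xs. xs ! i) (butlast xs) + (\<lambda>_. 0) (butlast xs) * last xs)"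
      by (rule PR_lin[OF Suc.IH[OF i] tot_const]) auto
    then show ?thesis by (rule tot_cong') (auto simp: nth_butlast i)
  qed
qed

lemma tot_vec:
  assumes "\<And>j. j < k \<Longrightarrow> tot n (\<phi>s j)"
  shows "\<exists>S. rrec n k S \<and> (\<forall>xs. length xs = n \<longrightarrow> S xs = Some (map (\<lambda>j. \<phi>s j xs) [0..<k]))"
proof -
  have "\<forall>j. \<exists>S. j < k \<longrightarrow> rrec n 1 S \<and> (\<forall>xs. length xs = n \<longrightarrow> S xs = Some [\<phi>s j xs])"
    using assms unfolding tot_def by blast
  then obtain Sf where Sf: "\<And>j. j < k \<Longrightarrow> rrec n 1 (Sf j) \<and> (\<forall>xs. length xs = n \<longrightarrow> Sf j xs = Some [\<phi>s j xs])"
    by metis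
  have "rrec n (length (map Sf [0..<k])) (juxt n (map Sf [0..<k]))" by (rule rr_juxt) (use Sf in auto)
  moreover have "juxt n (map Sf [0..<k]) xs = Some (map (\<lambda>j. \<phi>s j xs) [0..<k])" if "length xs = n" for xs
    using that Sf by (auto simp: juxt_def)
  ultimately show ?thesis by (intro exI[of _ "juxt n (map Sf [0..<k])"]) auto
qed

lemma tot_compk:
  assumes "tot k op" "\<And>j. j < k \<Longrightarrow> tot n (\<phi>s j)"
  shows "tot n (\<lambda>xs. op (map (\<lambda>j. \<phi>s j xs) [0..<k]))"
proof -
  obtain S where S: "rrec n k S" "\<And>xs. length xs = n \<Longrightarrow> S xs = Some (map (\<lambda>j. \<phi>s j xs) [0..<k])"
    using tot_vec[of k n \<phi>s] assms(2) by blast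
  obtain Op where Op: "rrec k 1 Op" "\<And>xs. length xs = k \<Longrightarrow> Op xs = Some [op xs]" using assms(1) unfolding tot_def by auto
  show ?thesis unfolding tot_def
    by (rule exI[of _ "pcomp Op S"], rule conjI, rule rr_comp[OF Op(1) S(1)]) (auto simp: pcomp_def S(2) Op(2))
qed

lemma tot_comp1: "tot 1 op \<Longrightarrow> tot n \<phi> \<Longrightarrow> tot n (\<lambda>xs. op [\<phi> xs])"
  using tot_compk[of 1 op n "\<lambda>_. \<phi>"] by simp

lemma tot_comp2: "tot 2 op \<Longrightarrow> tot n \<phi> \<Longrightarrow> tot n \<psi> \<Longrightarrow> tot n (\<lambda>xs. op [\<phi> xs, \<psi> xs])"
  using tot_compk[of 2 op n "\<lambda>j. if j = 0 then \<phi> else \<psi>"] by (simp add: numeral_2_eq_2 upt_rec)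

lemma tot_add2: "tot 2 (\<lambda>xs. xs ! 0 + xs ! 1)"
proof -
  have "tot (1+1) (\<lambda>xs. (\<lambda>xs. xs ! 0) (butlast xs) + (\<lambda>_. 1) (butlast xs) * last xs)"
    by (rule PR_lin[OF tot_proj tot_const]) auto
  then show ?thesis
    by (rule tot_cong') (auto simp: nth_butlast last_len numeral_2_eq_2)
qed

lemma tot_mult2: "tot 2 (\<lambda>xs. xs ! 0 * xs ! 1)"
proof -
  have "tot (1+1) (\<lambda>xs. (\<lambda>_. 0) (butlast xs) + (\<lambda>v. v ! 0) (butlast xs) * last xs)"
    by (rule PR_lin[OF tot_const tot_proj]) (auto simp: nth_append)
  then show ?thesis
    by (rule tot_cong') (auto simp: nth_butlast last_len numeral_2_eq_2)
qed

lemma tot_neg1: "tot 1 (\<lambda>xs. - (xs ! 0))"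
proof -
  have "tot (0+1) (\<lambda>xs. (\<lambda>_. 0) (butlast xs) + (\<lambda>_. -1) (butlast xs) * last xs)"
    by (rule PR_lin[OF tot_const tot_const]) auto
  then show ?thesis
    by (rule tot_cong') (auto simp: last_len)
qed

lemma tot_add: "tot n \<phi> \<Longrightarrow> tot n \<psi> \<Longrightarrow> tot n (\<lambda>xs. \<phi> xs + \<psi> xs)"
  using tot_comp2[OF tot_add2] by simp
lemma tot_mult: "tot n \<phi> \<Longrightarrow> tot n \<psi> \<Longrightarrow> tot n (\<lambda>xs. \<phi> xs * \<psi> xs)"
  using tot_comp2[OF tot_mult2] by simp
lemma tot_neg: "tot n \<phi> \<Longrightarrow> tot n (\<lambda>xs. - \<phi> xs)"
  using tot_comp1[OF tot_neg1] by simp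
lemma tot_diff: "tot n \<phi> \<Longrightarrow> tot n \<psi> \<Longrightarrow> tot n (\<lambda>xs. \<phi> xs - \<psi> xs)"
  using tot_add[OF _ tot_neg] by simp

lemma tot_butlast: "tot n \<phi> \<Longrightarrow> tot (n+1) (\<lambda>xs. \<phi> (butlast xs))"
proof -
  assume a: "tot n \<phi>"
  have "tot (n+1) (\<lambda>xs. \<phi> (map (\<lambda>j. xs ! j) [0..<n]))"
    by (rule tot_compk[OF a]) (auto intro: tot_proj)
  then show ?thesis
  proof (rule tot_cong)
    fix xs :: "real list" assume "length xs = n + 1"
    then have "map (\<lambda>j. xs ! j) [0..<n] = butlast xs"
      by (auto simp: list_eq_iff_nth_eq nth_butlast)
    then show "\<phi> (map (\<lambda>j. xs ! j) [0..<n]) = \<phi> (butlast xs)" by simp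
  qed
qed

lemma tot_last: "tot (n+1) (\<lambda>xs. last xs)"
  using tot_proj[of n "n+1"] by (rule tot_cong') (auto simp: last_len)


definition MNval :: "(real \<Rightarrow> real) \<Rightarrow> real option" where
  "MNval z = (let P = (\<exists>t\<ge>0. z t = 0); M = (\<exists>t\<le>0. z t = 0);
      tp = Inf {t. t \<ge> 0 \<and> z t = 0}; tm = Sup {t. t \<le> 0 \<and> z t = 0} in
     if P \<and> M then (if tp < - tm then Some tp else Some tm)
     else if P then Some tp else if M then Some tm else None)"

lemma tot_MN:
  assumes "tot (n+1) \<zeta>" "\<And>xs. length xs = n \<Longrightarrow> MNval (\<lambda>t. \<zeta> (xs @ [t])) = Some (r xs)"
  shows "tot n r"
proof -
  obtain F where F: "rrec (n+1) 1 F" "\<And>xs. length xs = n+1 \<Longrightarrow> F xs = Some [\<zeta> xs]" using assms(1) unfolding tot_def by auto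
  have "MNop n F xs = map_option (\<lambda>r. [r]) (MNval (\<lambda>t. \<zeta> (xs @ [t])))" if l: "length xs = n" for xs
  proof -
    have Fv: "F (xs @ [t]) = Some [\<zeta> (xs @ [t])]" for t using F(2) l by simp
    have dom: "xs @ [t] \<in> pdom F" for t using Fv by (simp add: pdom_def)
    have a: "tplus_def F xs = (\<exists>t\<ge>0. \<zeta> (xs @ [t]) = 0)" unfolding tplus_def_def using Fv dom by auto
    have b: "tminus_def F xs = (\<exists>t\<le>0. \<zeta> (xs @ [t]) = 0)" unfolding tminus_def_def using Fv dom by auto
    have c: "tplus F xs = Inf {t. t \<ge> 0 \<and> \<zeta> (xs @ [t]) = 0}" unfolding tplus_def using Fv by simp
    have d: "tminus F xs = Sup {t. t \<le> 0 \<and> \<zeta> (xs @ [t]) = 0}" unfolding tminus_def using Fv by simp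
    show ?thesis
      unfolding MNop_def MNval_def Let_def a[symmetric] b[symmetric] c[symmetric] d[symmetric]
      using l by auto
  qed
  then show ?thesis unfolding tot_def using rr_MN[OF F(1)] assms(2) by (intro exI[of _ "MNop n F"]) auto
qed

lemma MNval_pos:
  assumes "z p = 0" "p \<ge> 0" "\<And>t. z t = 0 \<Longrightarrow> p \<le> t"
  shows "MNval z = Some p"
proof -
  have I: "Inf {t. t \<ge> 0 \<and> z t = 0} = p" by (rule cInf_eq_minimum) (use assms in auto)
  show ?thesis
  proof (cases "p = 0")
    case True
    have S: "Sup {t. t \<le> 0 \<and> z t = 0} = 0" by (rule cSup_eq_maximum) (use assms True in auto)
    show ?thesis unfolding MNval_def Let_def I S using assms True by auto
  next
    case False
    have "\<not> (\<exists>t\<le>0. z t = 0)" using assms False by force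
    then show ?thesis unfolding MNval_def Let_def I using assms by auto
  qed
qed

lemma MNval_neg:
  assumes "z q = 0" "q \<le> 0" "\<And>t. z t = 0 \<Longrightarrow> t \<le> q"
  shows "MNval z = Some q"
proof -
  have S: "Sup {t. t \<le> 0 \<and> z t = 0} = q" by (rule cSup_eq_maximum) (use assms in auto)
  show ?thesis
  proof (cases "q = 0")
    case True
    have I: "Inf {t. t \<ge> 0 \<and> z t = 0} = 0" by (rule cInf_eq_minimum) (use assms True in auto)
    show ?thesis unfolding MNval_def Let_def I S using assms True by auto
  next
    case False
    have "\<not> (\<exists>t\<ge>0. z t = 0)" using assms False by force
    then show ?thesis unfolding MNval_def Let_def S using assms by auto
  qed
qed

lemma MNval_sym:
  assumes "z p = 0" "z (-p) = 0" "p \<ge> 0" "\<And>t. z t = 0 \<Longrightarrow> p \<le> \<bar>t\<bar>"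
  shows "MNval z = Some (-p)"
proof -
  have I: "Inf {t. t \<ge> 0 \<and> z t = 0} = p" by (rule cInf_eq_minimum) (use assms in force)+
  have S: "Sup {t. t \<le> 0 \<and> z t = 0} = -p" by (rule cSup_eq_maximum) (use assms in force)+
  show ?thesis unfolding MNval_def Let_def I S using assms by auto
qed

lemma tot_abs: assumes "tot n \<phi>" shows "tot n (\<lambda>xs. \<bar>\<phi> xs\<bar>)"
proof -
  have z: "tot (n+1) (\<lambda>xs. last xs * last xs - \<phi> (butlast xs) * \<phi> (butlast xs))"
    by (intro tot_diff tot_mult tot_last tot_butlast assms)
  have "tot n (\<lambda>xs. - \<bar>\<phi> xs\<bar>)"
  proof (rule tot_MN[OF z])
    fix xs :: "real list" assume "length xs = n"
    show "MNval (\<lambda>t. last (xs @ [t]) * last (xs @ [t]) - \<phi> (butlast (xs @ [t])) * \<phi> (butlast (xs @ [t]))) = Some (- \<bar>\<phi> xs\<bar>)"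
    proof (simp, rule MNval_sym)
      fix t assume "t * t - \<phi> xs * \<phi> xs = 0"
      then have "sqrt (t*t) = sqrt (\<phi> xs * \<phi> xs)" by simp
      then show "\<bar>\<phi> xs\<bar> \<le> \<bar>t\<bar>" by (simp add: real_sqrt_mult_self)
    qed auto
  qed
  then show ?thesis using tot_neg by fastforce
qed

definition stp :: "real \<Rightarrow> real" where "stp x = (if x > 0 then 1 else 0)"

lemma tot_stp: assumes "tot n \<phi>" shows "tot n (\<lambda>xs. stp (\<phi> xs))"
proof -
  have z: "tot (n+1) (\<lambda>xs. (last xs - 1) * (last xs * last xs + (\<phi> (butlast xs) + \<bar>\<phi> (butlast xs)\<bar>)))"
    by (intro tot_diff tot_mult tot_add tot_last tot_butlast tot_abs tot_const assms) auto
  show ?thesis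
  proof (rule tot_MN[OF z])
    fix xs :: "real list" assume "length xs = n"
    show "MNval (\<lambda>t. (last (xs @ [t]) - 1) * (last (xs @ [t]) * last (xs @ [t]) + (\<phi> (butlast (xs @ [t])) + \<bar>\<phi> (butlast (xs @ [t]))\<bar>))) = Some (stp (\<phi> xs))"
    proof (cases "\<phi> xs > 0")
      case True
      show ?thesis unfolding stp_def using True
        by simp (rule MNval_pos, auto, smt (verit) mult_nonneg_nonneg zero_le_square)
    next
      case False
      show ?thesis unfolding stp_def using False
        by simp (rule MNval_pos, auto simp: abs_if mult_eq_0_iff)
    qed
  qed
qed

lemma tot_inv: assumes "tot n \<phi>" "\<And>xs. length xs = n \<Longrightarrow> \<phi> xs \<noteq> 0" shows "tot n (\<lambda>xs. 1 / \<phi> xs)"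
proof -
  have z: "tot (n+1) (\<lambda>xs. \<phi> (butlast xs) * last xs - 1)"
    by (intro tot_diff tot_mult tot_last tot_butlast tot_const assms) auto
  show ?thesis
  proof (rule tot_MN[OF z])
    fix xs :: "real list" assume l: "length xs = n"
    have ne: "\<phi> xs \<noteq> 0" using assms(2)[OF l] .
    have eq: "\<phi> xs * t = 1 \<longleftrightarrow> t = 1 / \<phi> xs" for t using ne by (auto simp: field_simps)
    show "MNval (\<lambda>t. \<phi> (butlast (xs @ [t])) * last (xs @ [t]) - 1) = Some (1 / \<phi> xs)"
    proof (cases "\<phi> xs > 0")
      case True
      then show ?thesis by simp (rule MNval_pos, auto simp: eq)
    next
      case False
      then show ?thesis using ne by simp (rule MNval_neg, auto simp: eq)
    qed
  qed
qed

lemma tot_num: "tot n (\<lambda>_. 2)"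
  using tot_add[OF tot_const[of 1] tot_const[of 1]] by simp


lemma int_shift:
  fixes \<phi> u :: "real \<Rightarrow> real"
  assumes I: "\<forall>\<tau>\<in>{a..b}. (\<phi> has_integral (u \<tau> - u a)) {a..\<tau>}" and c: "c \<in> {a..b}"
  shows "\<forall>\<tau>\<in>{c..b}. (\<phi> has_integral (u \<tau> - u c)) {c..\<tau>}"
proof
  fix \<tau> assume t: "\<tau> \<in> {c..b}"
  have "\<tau> \<in> {a..b}" using t c by auto
  then have i1: "(\<phi> has_integral (u \<tau> - u a)) {a..\<tau>}" using I by blast
  have i2: "(\<phi> has_integral (u c - u a)) {a..c}" using I c by auto
  have int: "\<phi> integrable_on {a..\<tau>}" using i1 by blast
  have "integral {a..c} \<phi> + integral {c..\<tau>} \<phi> = integral {a..\<tau>} \<phi>"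
    by (rule Henstock_Kurzweil_Integration.integral_combine) (use c t int in auto)
  then have "integral {c..\<tau>} \<phi> = u \<tau> - u c" using i1 i2 by (simp add: integral_unique)
  moreover have "\<phi> integrable_on {c..\<tau>}" by (rule integrable_subinterval_real[OF int]) (use c in auto)
  ultimately show "(\<phi> has_integral (u \<tau> - u c)) {c..\<tau>}" by (simp add: has_integral_integral)
qed

lemma int_cont:
  fixes \<phi> u :: "real \<Rightarrow> real"
  assumes I: "\<forall>\<tau>\<in>{a..b}. (\<phi> has_integral (u \<tau> - u a)) {a..\<tau>}"
  shows "continuous_on {a..b} u"
proof (cases "a \<le> b")
  case True
  have "b \<in> {a..b}" using True by auto
  then have "\<phi> integrable_on {a..b}" using I by blast
  then have "continuous_on {a..b} (\<lambda>x. u a + integral {a..x} \<phi>)"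
    by (intro continuous_intros indefinite_integral_continuous_1)
  moreover have "\<And>x. x \<in> {a..b} \<Longrightarrow> u a + integral {a..x} \<phi> = u x"
  proof -
    fix x assume "x \<in> {a..b}"
    then have "integral {a..x} \<phi> = u x - u a" using I integral_unique by blast
    then show "u a + integral {a..x} \<phi> = u x" by simp
  qed
  ultimately show ?thesis using continuous_on_eq by blast
qed simp

lemma int_deriv:
  fixes \<phi> u :: "real \<Rightarrow> real"
  assumes I: "\<forall>\<tau>\<in>{a..b}. (\<phi> has_integral (u \<tau> - u a)) {a..\<tau>}"
    and pc: "continuous_on {a..b} \<phi>" and x: "a < x" "x < b"
  shows "(u has_real_derivative \<phi> x) (at x)"
proof -
  have "((\<lambda>t. integral {a..t} \<phi>) has_vector_derivative \<phi> x) (at x within {a..b})"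
    by (rule integral_has_vector_derivative[OF pc]) (use x in auto)
  then have "((\<lambda>t. integral {a..t} \<phi>) has_real_derivative \<phi> x) (at x)"
    using x by (simp add: at_within_Icc_at has_real_derivative_iff_has_vector_derivative)
  then have "((\<lambda>t. u a + integral {a..t} \<phi>) has_real_derivative \<phi> x) (at x)"
    using DERIV_add[OF DERIV_const] by fastforce
  then show ?thesis
  proof (rule has_field_derivative_transform_within_open[where S="{a<..<b}"])
    fix y assume "y \<in> {a<..<b}"
    then have "y \<in> {a..b}" by auto
    then have "integral {a..y} \<phi> = u y - u a" using I integral_unique by blast
    then show "u a + integral {a..y} \<phi> = u y" by simp
  qed (use x in auto)
qed

lemma lin_unique:
  fixes \<phi> u \<alpha> w :: "real \<Rightarrow> real"
  assumes se: "s < e" and e': "s \<le> e'" "e' \<le> e"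
    and I: "\<forall>\<tau>\<in>{s..e'}. (\<phi> has_integral (u \<tau> - u s)) {s..\<tau>}"
    and E: "\<And>\<tau>. s < \<tau> \<Longrightarrow> \<tau> < e \<Longrightarrow> \<tau> \<le> e' \<Longrightarrow> \<phi> \<tau> = - \<alpha> \<tau> * u \<tau>"
    and ac: "continuous_on {s<..<e} \<alpha>"
    and wc: "continuous_on {s..e} w" and ws: "w s = 1" and we: "w e = 0"
    and wp: "\<And>\<tau>. s \<le> \<tau> \<Longrightarrow> \<tau> < e \<Longrightarrow> w \<tau> > 0"
    and wd: "\<And>\<tau>. s < \<tau> \<Longrightarrow> \<tau> < e \<Longrightarrow> (w has_real_derivative (- \<alpha> \<tau> * w \<tau>)) (at \<tau>)"
    and t: "s \<le> \<tau>" "\<tau> \<le> e'"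
  shows "u \<tau> = u s * w \<tau>"
proof -
  have uc: "continuous_on {s..e'} u" by (rule int_cont[OF I])
  have ud: "(u has_real_derivative (- \<alpha> x * u x)) (at x)" if x: "s < x" "x < e'" for x
  proof -
    define d where "d = min (x - s) (e' - x) / 2"
    have dd: "d \<le> (x-s)/2" "d \<le> (e'-x)/2" "d > 0" using x unfolding d_def by auto
    have d1: "s < x - d" using dd x by (auto simp: field_simps)
    have d2: "x + d < e'" using dd x by (auto simp: field_simps)
    note d = dd(3) d1 d2
    have I2: "\<forall>\<tau>\<in>{x-d..x+d}. (\<phi> has_integral (u \<tau> - u (x-d))) {x-d..\<tau>}"
      using int_shift[OF I, of "x-d"] d by auto
    have "continuous_on {x-d..x+d} (\<lambda>\<tau>. - \<alpha> \<tau> * u \<tau>)"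
      by (intro continuous_intros continuous_on_subset[OF ac] continuous_on_subset[OF uc]) (use d e' in auto)
    then have "continuous_on {x-d..x+d} \<phi>"
    proof (rule continuous_on_eq)
      fix y assume "y \<in> {x-d..x+d}"
      then have "s < y" "y < e" "y \<le> e'" using d e' by auto
      then show "- \<alpha> y * u y = \<phi> y" using E by metis
    qed
    from int_deriv[OF I2 this] d have "(u has_real_derivative \<phi> x) (at x)" by auto
    then show ?thesis using E[of x] x e' by auto
  qed
  have main: "u \<tau> = u s * w \<tau>" if t: "s \<le> \<tau>" "\<tau> \<le> e'" "\<tau> < e" for \<tau>
  proof (cases "s = \<tau>")
    case True then show ?thesis using ws by simp
  next
    case False
    then have st: "s < \<tau>" using t by simp
    have "continuous_on {s..\<tau>} (\<lambda>t. u t / w t)"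
      by (intro continuous_intros continuous_on_subset[OF uc] continuous_on_subset[OF wc])
         (use t wp in \<open>auto simp: less_imp_neq[symmetric]\<close>, (metis less_irrefl)?)
    moreover have "DERIV (\<lambda>t. u t / w t) x :> 0" if "s < x" "x < \<tau>" for x
    proof -
      have "DERIV (\<lambda>t. u t / w t) x :> ((- \<alpha> x * u x) * w x - u x * (- \<alpha> x * w x)) / (w x * w x)"
      proof -
        have x1: "s < x" "x < e'" "x < e" using that t by auto
        have "w x \<noteq> 0" using wp[of x] x1 by auto
        then show ?thesis by (rule DERIV_divide[OF ud[OF x1(1,2)] wd[OF x1(1,3)]])
      qed
      moreover have "((- \<alpha> x * u x) * w x - u x * (- \<alpha> x * w x)) / (w x * w x) = 0" by (simp add: algebra_simps)
      ultimately show ?thesis by simp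
    qed
    ultimately have "u \<tau> / w \<tau> = u s / w s" by (rule DERIV_isconst_end[OF st])
    then show ?thesis using ws wp[of \<tau>] t by (simp add: field_simps)
  qed
  show ?thesis
  proof (cases "\<tau> < e")
    case True then show ?thesis using t by (intro main) auto
  next
    case False
    then have te: "\<tau> = e" "e' = e" using t e' by auto
    define g where "g t = u t - u s * w t" for t
    have gc: "continuous_on {s..e} g" unfolding g_def using uc wc te by (intro continuous_intros) auto
    have "(g \<longlongrightarrow> g e) (at_left e)" by (rule continuous_on_Icc_at_leftD[OF gc se])
    moreover have "eventually (\<lambda>t. g t = 0) (at_left e)"
      using eventually_at_left_real[OF se]
    proof (rule eventually_mono)
      fix t assume "t \<in> {s<..<e}"
      then have "u t = u s * w t" using te by (intro main) auto
      then show "g t = 0" unfolding g_def by simp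
    qed
    ultimately have "((\<lambda>_. 0) \<longlongrightarrow> g e) (at_left e)" using tendsto_cong[of g "\<lambda>_. 0" "at_left e"] by simp
    then have "0 = g e" by (rule tendsto_unique[OF trivial_limit_at_left_real tendsto_const])
    then show ?thesis using te unfolding g_def by simp
  qed
qed

lemma H_uniform:
  fixes \<phi> U :: "real \<Rightarrow> real" and a b c :: real
  assumes ab: "a \<le> 0" "0 \<le> b"
    and I: "\<And>\<tau>. \<tau> \<in> {a..b} \<Longrightarrow> (0 \<le> \<tau> \<longrightarrow> (\<phi> has_integral (U \<tau> - c)) {0..\<tau>}) \<and> (\<tau> < 0 \<longrightarrow> (\<phi> has_integral (c - U \<tau>)) {\<tau>..0})"
  shows "U 0 = c" "\<forall>\<tau>\<in>{a..b}. (\<phi> has_integral (U \<tau> - U a)) {a..\<tau>}"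
proof -
  have "(\<phi> has_integral (U 0 - c)) {0..0}" using I[of 0] ab by auto
  then show U0: "U 0 = c" using has_integral_unique[OF _ has_integral_refl(2)] by fastforce
  show "\<forall>\<tau>\<in>{a..b}. (\<phi> has_integral (U \<tau> - U a)) {a..\<tau>}"
  proof (cases "a = 0")
    case True then show ?thesis using I U0 by auto
  next
    case False
    then have a: "a < 0" using ab by simp
    have Ia: "(\<phi> has_integral (c - U a)) {a..0}" using I[of a] a ab by auto
    show ?thesis
    proof
      fix \<tau> assume t: "\<tau> \<in> {a..b}"
      show "(\<phi> has_integral (U \<tau> - U a)) {a..\<tau>}"
      proof (cases "0 \<le> \<tau>")
        case True
        have "(\<phi> has_integral (c - U a) + (U \<tau> - c)) {a..\<tau>}"
          by (rule has_integral_combine[OF _ True Ia]) (use a I t True in auto)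
        then show ?thesis by simp
      next
        case False
        have It: "(\<phi> has_integral (c - U \<tau>)) {\<tau>..0}" using I t False by auto
        have int: "\<phi> integrable_on {a..0}" using Ia by blast
        have "integral {a..\<tau>} \<phi> + integral {\<tau>..0} \<phi> = integral {a..0} \<phi>"
          by (rule Henstock_Kurzweil_Integration.integral_combine) (use t False int in auto)
        then have "integral {a..\<tau>} \<phi> = U \<tau> - U a" using Ia It by (simp add: integral_unique)
        moreover have "\<phi> integrable_on {a..\<tau>}" by (rule integrable_subinterval_real[OF int]) (use False in auto)
        ultimately show ?thesis by (simp add: has_integral_integral)
      qed
    qed
  qed
qed


lemma H_comp:
  assumes h: "h \<in> PR_H n f g v" and t: "t \<in> dom h" and i: "i < n"
    and P: "\<And>\<tau>. \<tau> \<in> dom h \<Longrightarrow> the (g (v @ [\<tau>] @ the (h \<tau>))) ! i = \<Phi> \<tau>"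
  shows "(0 \<le> t \<longrightarrow> (\<Phi> has_integral (the (h t) ! i - the (f v) ! i)) {0..t}) \<and>
         (t < 0 \<longrightarrow> (\<Phi> has_integral (the (f v) ! i - the (h t) ! i)) {t..0})"
proof -
  have A: "(0 \<le> t \<longrightarrow> ((\<lambda>\<tau>. the (g (v @ [\<tau>] @ the (h \<tau>))) ! i) has_integral (the (h t) ! i - the (f v) ! i)) {0..t}) \<and>
         (t < 0 \<longrightarrow> ((\<lambda>\<tau>. the (g (v @ [\<tau>] @ the (h \<tau>))) ! i) has_integral (the (f v) ! i - the (h t) ! i)) {t..0})"
    using h t i unfolding PR_H_def by blast
  have e1: "((\<lambda>\<tau>. the (g (v @ [\<tau>] @ the (h \<tau>))) ! i) has_integral X) S = (\<Phi> has_integral X) S"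
    if "S \<subseteq> dom h" for S X
    by (rule has_integral_cong) (use that P in auto)
  have s1: "{0..t} \<subseteq> dom h" "{t..0} \<subseteq> dom h"
    by (intro subsetI; rule H_interval[OF h t]; auto)+
  show ?thesis using A e1[OF s1(1)] e1[OF s1(2)] by simp
qed

lemma ftc_at:
  fixes F F' :: "real \<Rightarrow> real"
  assumes "a \<le> b" "\<And>x. (F has_real_derivative F' x) (at x)"
  shows "(F' has_integral (F b - F a)) {a..b}"
  by (rule fundamental_theorem_of_calculus[OF assms(1)])
     (use assms(2) in \<open>auto simp: has_real_derivative_iff_has_vector_derivative intro: has_vector_derivative_at_within\<close>)

lemma tot_sincos: "tot 1 (\<lambda>xs. sin (xs ! 0)) \<and> tot 1 (\<lambda>xs. cos (xs ! 0))"
proof -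
  have c01: "tot 0 (\<lambda>_. if j = 0 then 0 else 1)" if "j < 2" for j :: nat by (cases "j = 0") (simp_all add: tot_const)
  obtain S0 where S0: "rrec 0 2 S0" "\<And>xs. length xs = 0 \<Longrightarrow> S0 xs = Some (map (\<lambda>j. (\<lambda>_. if j = 0 then 0 else 1) xs) [0..<2])"
    using tot_vec[of 2 0 "\<lambda>j _. if j = 0 then 0 else 1", OF c01] by blast
  have S0v: "S0 [] = Some [0, 1]" using S0(2)[of "[]"] by (simp add: numeral_2_eq_2 upt_rec)
  have cg: "tot 3 (\<lambda>xs. if j = 0 then xs ! 2 else - (xs ! 1))" if "j < 2" for j :: nat
    by (cases "j = 0") (simp_all add: tot_proj tot_neg)
  obtain Sg where Sg: "rrec 3 2 Sg" "\<And>xs. length xs = 3 \<Longrightarrow> Sg xs = Some (map (\<lambda>j. (\<lambda>xs. if j = 0 then xs ! 2 else - (xs ! 1)) xs) [0..<2])"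
    using tot_vec[of 2 3 "\<lambda>j xs. if j = 0 then xs ! 2 else - (xs ! 1)", OF cg] by blast
  have Sgv: "Sg [\<tau>, p, q] = Some [q, - p]" for \<tau> p q using Sg(2)[of "[\<tau>, p, q]"] by (simp add: numeral_2_eq_2 upt_rec)
  define PR where "PR = PRop 0 2 S0 Sg"
  have rPR: "rrec 1 2 PR" unfolding PR_def using rr_PR[OF S0(1), of Sg] Sg(1) by (simp add: numeral_3_eq_3)
  have val: "PR [t] = Some [sin t, cos t]" for t
  proof -
    let ?h = "\<lambda>\<tau>::real. Some [sin \<tau>, cos \<tau>]"
    have inH: "?h \<in> PR_H 2 S0 Sg []"
      unfolding PR_H_def
    proof (intro CollectI conjI ballI allI impI)
      show "dom ?h = {} \<or> is_interval (dom ?h) \<and> 0 \<in> dom ?h" by (auto simp: dom_def is_interval_1)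
      show "[] \<in> pdom S0" if "dom ?h \<noteq> {}" using S0v by (simp add: pdom_def)
      fix \<tau> assume "\<tau> \<in> dom ?h"
      show "length (the (?h \<tau>)) = 2" by simp
      show "[] @ [\<tau>] @ the (?h \<tau>) \<in> pdom Sg" using Sgv by (simp add: pdom_def)
    next
      fix t' i assume "t' \<in> dom ?h" "i < (2::nat)"
      then have i: "i = 0 \<or> i = 1" by auto
      have d0: "(sin has_real_derivative cos x) (at x)" for x by (rule DERIV_sin)
      have d1: "(cos has_real_derivative - sin x) (at x)" for x by (rule DERIV_cos)
      { assume "0 \<le> t'"
        show "((\<lambda>\<tau>. the (Sg ([] @ [\<tau>] @ the (?h \<tau>))) ! i) has_integral the (?h t') ! i - the (S0 []) ! i) {0..t'}"
          using i ftc_at[OF \<open>0 \<le> t'\<close> d0] ftc_at[OF \<open>0 \<le> t'\<close> d1] by (auto simp: Sgv S0v) }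
      { assume "t' < 0"
        show "((\<lambda>\<tau>. the (Sg ([] @ [\<tau>] @ the (?h \<tau>))) ! i) has_integral the (S0 []) ! i - the (?h t') ! i) {t'..0}"
          using i ftc_at[of t' 0, OF _ d0] ftc_at[of t' 0, OF _ d1] \<open>t' < 0\<close> by (auto simp: Sgv S0v) }
    qed
    have uq: "?h t = h' t" if h': "h' \<in> PR_H 2 S0 Sg []" and t: "t \<in> dom h'" for h' t
    proof -
      define a where "a = min 0 t"
      define b where "b = max 0 t"
      have ab: "a \<le> 0" "0 \<le> b" "t \<in> {a..b}" unfolding a_def b_def by auto
      have sub: "\<tau> \<in> dom h'" if "\<tau> \<in> {a..b}" for \<tau> using H_interval[OF h' t] that unfolding a_def b_def by auto
      have len: "length (the (h' \<tau>)) = 2" if "\<tau> \<in> dom h'" for \<tau> using h' that unfolding PR_H_def by auto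
      define p where "p \<tau> = the (h' \<tau>) ! 0" for \<tau>
      define q where "q \<tau> = the (h' \<tau>) ! 1" for \<tau>
      have hl: "the (h' \<tau>) = [p \<tau>, q \<tau>]" if "\<tau> \<in> dom h'" for \<tau>
        using len[OF that] unfolding p_def q_def
        by (cases "the (h' \<tau>)" rule: list.exhaust; cases "tl (the (h' \<tau>))" rule: list.exhaust) auto
      have g0: "the (Sg ([] @ [\<tau>] @ the (h' \<tau>))) ! 0 = q \<tau>" if "\<tau> \<in> dom h'" for \<tau> using hl[OF that] Sgv by simp
      have g1: "the (Sg ([] @ [\<tau>] @ the (h' \<tau>))) ! 1 = - p \<tau>" if "\<tau> \<in> dom h'" for \<tau> using hl[OF that] Sgv by simp
      have Ip: "(0 \<le> \<tau> \<longrightarrow> (q has_integral (p \<tau> - 0)) {0..\<tau>}) \<and> (\<tau> < 0 \<longrightarrow> (q has_integral (0 - p \<tau>)) {\<tau>..0})"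
        if "\<tau> \<in> {a..b}" for \<tau>
        using H_comp[OF h' sub[OF that], of 0 q] g0 S0v unfolding p_def by auto
      have Iq: "(0 \<le> \<tau> \<longrightarrow> ((\<lambda>\<tau>. - p \<tau>) has_integral (q \<tau> - 1)) {0..\<tau>}) \<and> (\<tau> < 0 \<longrightarrow> ((\<lambda>\<tau>. - p \<tau>) has_integral (1 - q \<tau>)) {\<tau>..0})"
        if "\<tau> \<in> {a..b}" for \<tau>
        using H_comp[OF h' sub[OF that], of 1 "\<lambda>\<tau>. - p \<tau>"] g1 S0v unfolding q_def by auto
      note Up = H_uniform[OF ab(1,2) Ip]
      note Uq = H_uniform[OF ab(1,2) Iq]
      have pc: "continuous_on {a..b} p" by (rule int_cont[OF Up(2)])
      have qc: "continuous_on {a..b} q" by (rule int_cont[OF Uq(2)])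
      have pd: "(p has_real_derivative q x) (at x)" if "a < x" "x < b" for x
        by (rule int_deriv[OF Up(2) qc that])
      have mpc: "continuous_on {a..b} (\<lambda>\<tau>. - p \<tau>)" by (intro continuous_intros pc)
      have qd: "(q has_real_derivative - p x) (at x)" if "a < x" "x < b" for x
        using int_deriv[OF Uq(2) mpc that] by simp
      define E where "E \<tau> = (p \<tau> - sin \<tau>) * (p \<tau> - sin \<tau>) + (q \<tau> - cos \<tau>) * (q \<tau> - cos \<tau>)" for \<tau>
      have E0: "E 0 = 0" unfolding E_def using Up(1) Uq(1) by simp
      have Et: "E t = 0"
      proof (cases "a < b")
        case True
        have Ec: "continuous_on {a..b} E" unfolding E_def by (intro continuous_intros pc qc)
        have Ed: "DERIV E x :> 0" if "a < x" "x < b" for x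
        proof -
          have A: "DERIV (\<lambda>\<tau>. p \<tau> - sin \<tau>) x :> q x - cos x" by (rule DERIV_diff[OF pd[OF that] DERIV_sin])
          have B: "DERIV (\<lambda>\<tau>. q \<tau> - cos \<tau>) x :> - p x - - sin x" by (rule DERIV_diff[OF qd[OF that] DERIV_cos])
          have "DERIV E x :> ((q x - cos x) * (p x - sin x) + (q x - cos x) * (p x - sin x))
               + ((- p x - - sin x) * (q x - cos x) + (- p x - - sin x) * (q x - cos x))"
            unfolding E_def by (rule DERIV_add[OF DERIV_mult[OF A A] DERIV_mult[OF B B]])
          moreover have "((q x - cos x) * (p x - sin x) + (q x - cos x) * (p x - sin x))
               + ((- p x - - sin x) * (q x - cos x) + (- p x - - sin x) * (q x - cos x)) = 0" by (simp add: algebra_simps)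
          ultimately show ?thesis by simp
        qed
        have "E t = E a" by (rule DERIV_isconst2[OF True Ec Ed]) (use ab in auto)
        moreover have "E 0 = E a" by (rule DERIV_isconst2[OF True Ec Ed]) (use ab in auto)
        ultimately show ?thesis using E0 by simp
      next
        case False
        then have "t = 0" using ab unfolding a_def b_def by auto
        then show ?thesis using E0 by simp
      qed
      have "p t - sin t = 0 \<and> q t - cos t = 0" using Et unfolding E_def by (rule iffD1[OF sum_squares_eq_zero_iff])
      then have "p t = sin t" "q t = cos t" by auto
      then show ?thesis using hl[OF t] t by auto
    qed
    have "unique_in ?h (PR_H 2 S0 Sg [])" unfolding unique_in_def using inH uq by blast
    then show ?thesis using PRop_eval[of "[]" 0 ?h 2 S0 Sg t] unfolding PR_def by simp
  qed
  obtain P0 where P0: "rrec 2 1 P0" "\<And>xs. length xs = 2 \<Longrightarrow> P0 xs = Some [xs ! 0]" using tot_proj[of 0 2] unfolding tot_def by auto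
  obtain P1 where P1: "rrec 2 1 P1" "\<And>xs. length xs = 2 \<Longrightarrow> P1 xs = Some [xs ! 1]" using tot_proj[of 1 2] unfolding tot_def by auto
  have "tot 1 (\<lambda>xs. sin (xs ! 0))" unfolding tot_def
  proof (intro exI conjI allI impI)
    show "rrec 1 1 (pcomp P0 PR)" by (rule rr_comp[OF P0(1) rPR])
    fix xs :: "real list" assume "length xs = 1"
    then obtain t where "xs = [t]" by (cases xs) auto
    then show "pcomp P0 PR xs = Some [sin (xs ! 0)]" by (simp add: pcomp_def val P0(2))
  qed
  moreover have "tot 1 (\<lambda>xs. cos (xs ! 0))" unfolding tot_def
  proof (intro exI conjI allI impI)
    show "rrec 1 1 (pcomp P1 PR)" by (rule rr_comp[OF P1(1) rPR])
    fix xs :: "real list" assume "length xs = 1"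
    then obtain t where "xs = [t]" by (cases xs) auto
    then show "pcomp P1 PR xs = Some [cos (xs ! 0)]" by (simp add: pcomp_def val P1(2))
  qed
  ultimately show ?thesis by blast
qed

lemma tot_sin: "tot n \<phi> \<Longrightarrow> tot n (\<lambda>xs. sin (\<phi> xs))"
  using tot_comp1[OF conjunct1[OF tot_sincos]] by simp
lemma tot_cos: "tot n \<phi> \<Longrightarrow> tot n (\<lambda>xs. cos (\<phi> xs))"
  using tot_comp1[OF conjunct2[OF tot_sincos]] by simp

lemma tot_pi: "tot n (\<lambda>_. pi)"
proof -
  have z: "tot (0+1) (\<lambda>xs. cos (last xs))" by (intro tot_cos tot_last)
  have "tot 0 (\<lambda>_. - (pi/2))"
  proof (rule tot_MN[OF z])
    fix xs :: "real list" assume "length xs = 0"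
    have "MNval (\<lambda>t. cos t) = Some (- (pi/2))"
    proof (rule MNval_sym)
      fix t :: real assume "cos t = 0"
      show "pi/2 \<le> \<bar>t\<bar>"
      proof (rule ccontr)
        assume "\<not> pi/2 \<le> \<bar>t\<bar>"
        then have "-(pi/2) < t" "t < pi/2" by auto
        then have "cos t > 0" by (rule cos_gt_zero_pi)
        then show False using \<open>cos t = 0\<close> by simp
      qed
    qed auto
    then show "MNval (\<lambda>t. cos (last (xs @ [t]))) = Some (- (pi / 2))" by simp
  qed
  then have "tot n (\<lambda>_. - (pi/2))" using tot_lift0 by blast
  then have "tot n (\<lambda>_. - (2 * - (pi/2)))" by (rule tot_neg[OF tot_mult[OF tot_num]])
  then show ?thesis by simp
qed


definition aA :: "real \<Rightarrow> real" where
  "aA t = stp (sin t) * sin t * (1 / (1 + cos t + (1 - stp (sin t))))"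
definition aB :: "real \<Rightarrow> real" where
  "aB t = stp (- sin t) * (- sin t) * (1 / (1 - cos t + (1 - stp (- sin t))))"
definition sel :: "real \<Rightarrow> real" where
  "sel t = 1 - stp (- sin t)"

lemma cos_m1: "cos (t::real) = -1 \<Longrightarrow> sin t = 0"
  using sin_cos_squared_add[of t] by (simp add: power2_eq_square)
lemma cos_p1: "cos (t::real) = 1 \<Longrightarrow> sin t = 0"
  using sin_cos_squared_add[of t] by (simp add: power2_eq_square)

lemma DA_nz: "1 + cos t + (1 - stp (sin t)) \<noteq> 0"
proof (cases "sin t > 0")
  case True
  then have "cos t \<noteq> -1" using cos_m1[of t] by auto
  then show ?thesis using True cos_ge_minus_one[of t] by (simp add: stp_def)
next
  case False
  have c: "-1 \<le> cos t" by simp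
  have "stp (sin t) = 0" using False by (simp add: stp_def)
  with c show ?thesis by linarith
qed
lemma DB_nz: "1 - cos t + (1 - stp (- sin t)) \<noteq> 0"
proof (cases "sin t < 0")
  case True
  then have "cos t \<noteq> 1" using cos_p1[of t] by auto
  then show ?thesis using True cos_le_one[of t] by (simp add: stp_def)
next
  case False
  have c: "cos t \<le> 1" by simp
  have "stp (- sin t) = 0" using False by (simp add: stp_def)
  with c show ?thesis by linarith
qed

lemma aA_pos: "sin t > 0 \<Longrightarrow> aA t = sin t / (1 + cos t)"
  by (simp add: aA_def stp_def)
lemma aA_zero: "sin t \<le> 0 \<Longrightarrow> aA t = 0"
  by (simp add: aA_def stp_def)
lemma aB_neg: "sin t < 0 \<Longrightarrow> aB t = - sin t / (1 - cos t)"
  by (simp add: aB_def stp_def)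
lemma aB_zero: "sin t \<ge> 0 \<Longrightarrow> aB t = 0"
  by (simp add: aB_def stp_def)
lemma sel_one: "sin t \<ge> 0 \<Longrightarrow> sel t = 1"
  by (simp add: sel_def stp_def)
lemma sel_zero: "sin t < 0 \<Longrightarrow> sel t = 0"
  by (simp add: sel_def stp_def)

lemma tot_aA: assumes p: "tot n \<psi>" shows "tot n (\<lambda>xs. aA (\<psi> xs))"
proof -
  have d: "tot n (\<lambda>xs. 1 + cos (\<psi> xs) + (1 - stp (sin (\<psi> xs))))"
    by (intro tot_add tot_cos tot_diff tot_stp tot_sin tot_const p) auto
  have i: "tot n (\<lambda>xs. 1 / (1 + cos (\<psi> xs) + (1 - stp (sin (\<psi> xs)))))"
    by (rule tot_inv[OF d DA_nz])
  show ?thesis unfolding aA_def by (rule tot_mult[OF tot_mult[OF tot_stp[OF tot_sin[OF p]] tot_sin[OF p]] i])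
qed
lemma tot_aB: assumes p: "tot n \<psi>" shows "tot n (\<lambda>xs. aB (\<psi> xs))"
proof -
  have d: "tot n (\<lambda>xs. 1 - cos (\<psi> xs) + (1 - stp (- sin (\<psi> xs))))"
    by (intro tot_add tot_cos tot_diff tot_stp tot_sin tot_neg tot_const p) auto
  have i: "tot n (\<lambda>xs. 1 / (1 - cos (\<psi> xs) + (1 - stp (- sin (\<psi> xs)))))"
    by (rule tot_inv[OF d DB_nz])
  show ?thesis unfolding aB_def by (rule tot_mult[OF tot_mult[OF tot_stp[OF tot_neg[OF tot_sin[OF p]]] tot_neg[OF tot_sin[OF p]]] i])
qed
lemma tot_sel: "tot n \<psi> \<Longrightarrow> tot n (\<lambda>xs. sel (\<psi> xs))"
  unfolding sel_def by (intro tot_stp tot_sin tot_diff tot_neg tot_const) auto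

definition argv :: "nat \<Rightarrow> real list \<Rightarrow> real list" where
  "argv m xs = map (\<lambda>i. sel (xs ! m) * xs ! (m+1+i) + (1 - sel (xs ! m)) * xs ! (2*m+1+i)) [0..<m]"

definition gv :: "pfun \<Rightarrow> nat \<Rightarrow> real list \<Rightarrow> nat \<Rightarrow> real" where
  "gv f m xs i = (if i < m then aB (xs ! m) * (xs ! (2*m+1+i) - xs ! (m+1+i))
     else aA (xs ! m) * (the (f (argv m xs)) ! (i - m) - xs ! (2*m+1+(i-m))))"

lemma tot_choice:
  assumes "\<And>i. i < k \<Longrightarrow> tot n (\<phi>s i)"
  shows "\<exists>R. \<forall>i<k. rrec n 1 (R i) \<and> (\<forall>xs. length xs = n \<longrightarrow> R i xs = Some [\<phi>s i xs])"
proof -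
  have "\<forall>i. \<exists>S. i < k \<longrightarrow> rrec n 1 S \<and> (\<forall>xs. length xs = n \<longrightarrow> S xs = Some [\<phi>s i xs])"
    using assms unfolding tot_def by blast
  then show ?thesis by metis
qed

lemma G_exists:
  assumes f: "rrec m m f"
  shows "\<exists>G. rrec (3*m+1) (2*m) G \<and>
     (\<forall>xs. length xs = 3*m+1 \<longrightarrow> argv m xs \<in> pdom f \<longrightarrow> G xs \<noteq> None) \<and>
     (\<forall>xs ys. G xs = Some ys \<longrightarrow> (\<forall>i<2*m. ys ! i = gv f m xs i))"
proof -
  let ?n = "3*m+1"
  have targ: "tot ?n (\<lambda>xs. sel (xs ! m) * xs ! (m+1+i) + (1 - sel (xs ! m)) * xs ! (2*m+1+i))" if "i < m" for i
    using that by (intro tot_add tot_mult tot_sel tot_proj tot_diff tot_const) auto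
  obtain Sarg where Sarg: "rrec ?n m Sarg" "\<And>xs. length xs = ?n \<Longrightarrow> Sarg xs = Some (argv m xs)"
    using tot_vec[of m ?n "\<lambda>i xs. sel (xs ! m) * xs ! (m+1+i) + (1 - sel (xs ! m)) * xs ! (2*m+1+i)", OF targ]
    unfolding argv_def by blast
  have rfa: "rrec ?n m (pcomp f Sarg)" by (rule rr_comp[OF f Sarg(1)])
  obtain Pj where Pj: "\<And>i. i < m \<Longrightarrow> rrec m 1 (Pj i) \<and> (\<forall>ys. length ys = m \<longrightarrow> Pj i ys = Some [ys ! i])"
    using tot_choice[of m m "\<lambda>i ys. ys ! i"] tot_proj by blast
  have tZ: "tot ?n (\<lambda>xs. xs ! (2*m+1+i))" if "i < m" for i using that by (intro tot_proj) auto
  obtain Zj where Zj: "\<And>i. i < m \<Longrightarrow> rrec ?n 1 (Zj i) \<and> (\<forall>xs. length xs = ?n \<longrightarrow> Zj i xs = Some [xs ! (2*m+1+i)])"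
    using tot_choice[of m ?n "\<lambda>i xs. xs ! (2*m+1+i)", OF tZ] by blast
  obtain Sa where Sa: "rrec ?n 1 Sa" "\<And>xs. length xs = ?n \<Longrightarrow> Sa xs = Some [aA (xs ! m)]"
    using tot_aA[OF tot_proj[of m ?n]] unfolding tot_def by auto
  obtain Sop where Sop: "rrec 3 1 Sop" "\<And>ys. length ys = 3 \<Longrightarrow> Sop ys = Some [ys ! 1 * (ys ! 0 - ys ! 2)]"
    using tot_mult[OF tot_proj[of 1 3] tot_diff[OF tot_proj[of 0 3] tot_proj[of 2 3]]] unfolding tot_def by auto
  define PC where "PC i = pcomp Sop (juxt ?n [pcomp (Pj i) (pcomp f Sarg), Sa, Zj i])" for i
  have rPC: "rrec ?n 1 (PC i)" if "i < m" for i
  proof -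
    have "rrec ?n (length [pcomp (Pj i) (pcomp f Sarg), Sa, Zj i]) (juxt ?n [pcomp (Pj i) (pcomp f Sarg), Sa, Zj i])"
      by (rule rr_juxt) (use rr_comp[OF conjunct1[OF Pj[OF that]] rfa] Sa Zj[OF that] in auto)
    then show ?thesis unfolding PC_def using rr_comp[OF Sop(1)] by (simp add: numeral_3_eq_3)
  qed
  have vPC: "PC i xs = (if argv m xs \<in> pdom f then Some [aA (xs ! m) * (the (f (argv m xs)) ! i - xs ! (2*m+1+i))] else None)"
    if "i < m" "length xs = ?n" for i xs
  proof (cases "f (argv m xs)")
    case None
    then show ?thesis using that Sarg(2) by (simp add: PC_def pcomp_def juxt_def pdom_def)
  next
    case (Some ys)
    have "length ys = m" using rrec_arity[OF f Some] by simp
    then show ?thesis using that Sarg(2) Some Pj[OF that(1)] Zj[OF that(1)] Sa(2)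
      by (simp add: PC_def pcomp_def juxt_def pdom_def Sop(2))
  qed
  have tT: "tot ?n (\<lambda>xs. aB (xs ! m) * (xs ! (2*m+1+i) - xs ! (m+1+i)))" if "i < m" for i
    using that by (intro tot_mult tot_aB tot_diff tot_proj) auto
  obtain Tc where Tc: "\<And>i. i < m \<Longrightarrow> rrec ?n 1 (Tc i) \<and> (\<forall>xs. length xs = ?n \<longrightarrow> Tc i xs = Some [aB (xs ! m) * (xs ! (2*m+1+i) - xs ! (m+1+i))])"
    using tot_choice[of m ?n "\<lambda>i xs. aB (xs ! m) * (xs ! (2*m+1+i) - xs ! (m+1+i))", OF tT] by blast
  define Gc where "Gc i = (if i < m then Tc i else PC (i - m))" for i
  define G where "G = juxt ?n (map Gc [0..<2*m])"
  have rG: "rrec ?n (2*m) G"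
    using rr_juxt[of "map Gc [0..<2*m]" ?n] Tc rPC unfolding G_def Gc_def by fastforce
  have vGc: "Gc i xs = (if i < m \<or> argv m xs \<in> pdom f then Some [gv f m xs i] else None)" if "i < 2*m" "length xs = ?n" for i xs
    using that Tc vPC[of "i - m" xs] unfolding Gc_def gv_def by auto
  show ?thesis
  proof (intro exI conjI allI impI)
    show "rrec ?n (2*m) G" by (rule rG)
    fix xs assume "length xs = ?n" "argv m xs \<in> pdom f"
    then show "G xs \<noteq> None" unfolding G_def juxt_def using vGc by auto
  next
    fix xs ys i assume a: "G xs = Some ys" "i < 2*m"
    then have l: "length xs = ?n" and d: "\<forall>g\<in>set (map Gc [0..<2*m]). g xs \<noteq> None"
      and y: "ys = map (\<lambda>g. hd (the (g xs))) (map Gc [0..<2*m])" unfolding G_def juxt_def by (auto split: if_splits)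
    have "Gc i xs \<noteq> None" using d a(2) by auto
    then have "Gc i xs = Some [gv f m xs i]" using vGc[OF a(2) l] by (auto split: if_splits)
    then show "ys ! i = gv f m xs i" using y a(2) by simp
  qed
qed


lemma trig_shift: "sin (2*pi*real j + x) = sin x" "cos (2*pi*real j + x) = cos x"
proof -
  have s: "sin (2*pi*real j) = 0" "cos (2*pi*real j) = 1"
    using sin_2npi[of j] cos_2npi[of j] by (simp_all add: mult_ac)
  show "sin (2*pi*real j + x) = sin x" "cos (2*pi*real j + x) = cos x"
    by (simp_all add: sin_add cos_add s)
qed

lemma phA: "2*pi*real j < x \<Longrightarrow> x < 2*pi*real j + pi \<Longrightarrow> sin x > 0"
  using sin_gt_zero[of "x - 2*pi*real j"] trig_shift(1)[of j "x - 2*pi*real j"] by simp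
lemma phA': "2*pi*real j \<le> x \<Longrightarrow> x \<le> 2*pi*real j + pi \<Longrightarrow> sin x \<ge> 0"
  using sin_ge_zero[of "x - 2*pi*real j"] trig_shift(1)[of j "x - 2*pi*real j"] by simp
lemma phB: "2*pi*real j + pi < x \<Longrightarrow> x < 2*pi*real j + 2*pi \<Longrightarrow> sin x < 0"
  using sin_lt_zero[of "x - 2*pi*real j"] trig_shift(1)[of j "x - 2*pi*real j"] by simp
lemma phB': "2*pi*real j + pi \<le> x \<Longrightarrow> x \<le> 2*pi*real j + 2*pi \<Longrightarrow> sin x \<le> 0"
proof (cases "x = 2*pi*real j + 2*pi")
  case True
  then show ?thesis using trig_shift(1)[of j "2*pi"] by simp
next
  case False
  assume "2*pi*real j + pi \<le> x" "x \<le> 2*pi*real j + 2*pi"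
  then show ?thesis using False sin_le_zero[of "x - 2*pi*real j"] trig_shift(1)[of j "x - 2*pi*real j"] by simp
qed
lemma cos0: "cos (2*pi*real j) = 1" using trig_shift(2)[of j 0] by simp
lemma cos1: "cos (2*pi*real j + pi) = -1" using trig_shift(2)[of j pi] by simp
lemma cos2: "cos (2*pi*real j + 2*pi) = 1" using trig_shift(2)[of j "2*pi"] by simp

lemma cosA: "sin (x::real) > 0 \<Longrightarrow> 1 + cos x > 0"
proof -
  assume "sin x > 0"
  then have "cos x \<noteq> -1" using cos_m1[of x] by auto
  moreover have "-1 \<le> cos x" by simp
  ultimately show ?thesis by linarith
qed
lemma cosB: "sin (x::real) < 0 \<Longrightarrow> 1 - cos x > 0"
proof -
  assume "sin x < 0"
  then have "cos x \<noteq> 1" using cos_p1[of x] by auto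
  moreover have "cos x \<le> 1" by simp
  ultimately show ?thesis by linarith
qed

definition jt :: "real \<Rightarrow> nat" where "jt t = nat \<lfloor>t / (2*pi)\<rfloor>"

lemma jt_eq: assumes "2*pi*real j \<le> t" "t < 2*pi*real j + 2*pi" shows "jt t = j"
proof -
  have p: "2*pi > 0" by simp
  have "real j \<le> t / (2*pi)" using assms(1) p by (simp add: field_simps)
  moreover have "t / (2*pi) < real j + 1" using assms(2) p by (simp add: field_simps)
  ultimately have "\<lfloor>t / (2*pi)\<rfloor> = int j" by (simp add: floor_eq_iff)
  then show ?thesis unfolding jt_def by simp
qed

definition Yf :: "(nat \<Rightarrow> real list) \<Rightarrow> real \<Rightarrow> nat \<Rightarrow> real" where
  "Yf a t i = (if t - 2*pi*real (jt t) \<le> pi then a (jt t) ! i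
     else a (Suc (jt t)) ! i + (a (jt t) ! i - a (Suc (jt t)) ! i) * (1 - cos t) / 2)"
definition Zf :: "(nat \<Rightarrow> real list) \<Rightarrow> real \<Rightarrow> nat \<Rightarrow> real" where
  "Zf a t i = (if t - 2*pi*real (jt t) \<le> pi then a (Suc (jt t)) ! i + (a (jt t) ! i - a (Suc (jt t)) ! i) * (1 + cos t) / 2
     else a (Suc (jt t)) ! i)"
definition hv :: "(nat \<Rightarrow> real list) \<Rightarrow> nat \<Rightarrow> real \<Rightarrow> real list" where
  "hv a m t = map (Yf a t) [0..<m] @ map (Zf a t) [0..<m]"

lemma YZ_A:
  assumes "2*pi*real j \<le> t" "t \<le> 2*pi*real j + pi"
  shows "Yf a t i = a j ! i" "Zf a t i = a (Suc j) ! i + (a j ! i - a (Suc j) ! i) * (1 + cos t) / 2"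
proof -
  have "jt t = j" by (rule jt_eq) (use assms pi_gt_zero in linarith)+
  then show "Yf a t i = a j ! i" "Zf a t i = a (Suc j) ! i + (a j ! i - a (Suc j) ! i) * (1 + cos t) / 2"
    using assms unfolding Yf_def Zf_def by auto
qed

lemma YZ_B:
  assumes "2*pi*real j + pi \<le> t" "t \<le> 2*pi*real j + 2*pi"
  shows "Yf a t i = a (Suc j) ! i + (a j ! i - a (Suc j) ! i) * (1 - cos t) / 2" "Zf a t i = a (Suc j) ! i"
proof -
  have pp: "pi > 0" by simp
  have "Yf a t i = a (Suc j) ! i + (a j ! i - a (Suc j) ! i) * (1 - cos t) / 2 \<and> Zf a t i = a (Suc j) ! i"
  proof (cases "t = 2*pi*real j + 2*pi")
    case True
    have "2*pi*real (Suc j) = 2*pi*real j + 2*pi" by (simp add: algebra_simps)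
    then have "jt t = Suc j" using True by (intro jt_eq) auto
    moreover have "cos t = 1" using True cos2 by simp
    ultimately show ?thesis using True pp unfolding Yf_def Zf_def by (auto simp: field_simps)
  next
    case False
    then have tl: "t < 2*pi*real j + 2*pi" using assms by simp
    have "jt t = j" by (rule jt_eq) (use assms tl pp in linarith)+
    moreover have "t - 2*pi*real j = pi \<Longrightarrow> cos t = -1" using cos1[of j] by (metis add_diff_cancel_left' diff_add_cancel add.commute)
    ultimately show ?thesis using assms unfolding Yf_def Zf_def by (auto simp: field_simps)
  qed
  then show "Yf a t i = a (Suc j) ! i + (a j ! i - a (Suc j) ! i) * (1 - cos t) / 2" "Zf a t i = a (Suc j) ! i" by auto
qed

lemma xs_nth:
  assumes "length v = m" "length w = 2*m"
  shows "(v @ [\<sigma>] @ w) ! m = \<sigma>" "i < 2*m \<Longrightarrow> (v @ [\<sigma>] @ w) ! (m+1+i) = w ! i"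
    "i < m \<Longrightarrow> (v @ [\<sigma>] @ w) ! (2*m+1+i) = w ! (m+i)" "length (v @ [\<sigma>] @ w) = 3*m+1"
  using assms by (auto simp: nth_append)

lemma argv_eq:
  assumes "length v = m" "length w = 2*m"
  shows "argv m (v @ [\<sigma>] @ w) = map (\<lambda>i. sel \<sigma> * w ! i + (1 - sel \<sigma>) * w ! (m+i)) [0..<m]"
  unfolding argv_def using xs_nth[OF assms] by simp

lemma gv_y: assumes "length v = m" "length w = 2*m" "i < m"
  shows "gv f m (v @ [\<sigma>] @ w) i = aB \<sigma> * (w ! (m+i) - w ! i)"
  unfolding gv_def using xs_nth[OF assms(1,2)] assms(3) by simp

lemma gv_z: assumes "length v = m" "length w = 2*m" "i < m"
  shows "gv f m (v @ [\<sigma>] @ w) (m+i) = aA \<sigma> * (the (f (argv m (v @ [\<sigma>] @ w))) ! i - w ! (m+i))"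
  unfolding gv_def using xs_nth[OF assms(1,2)] assms(3) by simp


lemma jt_bounds: assumes "0 \<le> t" shows "2*pi*real (jt t) \<le> t" "t < 2*pi*real (jt t) + 2*pi"
proof -
  have p: "2*pi > 0" by simp
  have f0: "0 \<le> \<lfloor>t / (2*pi)\<rfloor>" using assms p by simp
  have r: "real (jt t) = of_int \<lfloor>t / (2*pi)\<rfloor>" unfolding jt_def using f0 by simp
  define x where "x = t / (2*pi)"
  have tx: "t = 2*pi*x" unfolding x_def using p by simp
  have "real (jt t) \<le> x" using r of_int_floor_le[of x] unfolding x_def by simp
  then show "2*pi*real (jt t) \<le> t" unfolding tx using p by (intro mult_left_mono) auto
  have "x < real (jt t) + 1" using r real_of_int_floor_add_one_gt[of x] unfolding x_def by simp
  then have "2*pi*x < 2*pi*(real (jt t) + 1)" using p by (intro mult_strict_left_mono) auto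
  then show "t < 2*pi*real (jt t) + 2*pi" unfolding tx by (simp add: algebra_simps)
qed

lemma zero_int: "(\<phi> has_integral X) {s..t} \<Longrightarrow> (\<And>\<sigma>. \<sigma> \<in> {s..t} \<Longrightarrow> \<phi> \<sigma> = (0::real)) \<Longrightarrow> X = 0"
proof -
  assume a: "(\<phi> has_integral X) {s..t}" "\<And>\<sigma>. \<sigma> \<in> {s..t} \<Longrightarrow> \<phi> \<sigma> = 0"
  then have "((\<lambda>_. 0::real) has_integral X) {s..t}" using has_integral_cong[of "{s..t}" \<phi> "\<lambda>_. 0"] by simp
  then show "X = 0" using has_integral_0 has_integral_unique by blast
qed

locale itr =
  fixes f :: pfun and m :: nat and G :: pfun and F0 :: pfun and v :: "real list" and k :: nat
  assumes f: "rrec m m f"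
    and Gd: "\<And>xs. length xs = 3*m+1 \<Longrightarrow> argv m xs \<in> pdom f \<Longrightarrow> G xs \<noteq> None"
    and Gv: "\<And>xs ys i. G xs = Some ys \<Longrightarrow> i < 2*m \<Longrightarrow> ys ! i = gv f m xs i"
    and F0: "F0 v = Some (v @ v)"
    and lv: "length v = m"
    and k: "k \<ge> 1"
    and vk: "piter f k v \<noteq> None"
begin

definition a :: "nat \<Rightarrow> real list" where "a j = the (piter f j v)"
definition T :: real where "T = (2 * real k - 1) * pi"
definition hh :: "real \<Rightarrow> real list option" where "hh t = (if 0 \<le> t \<and> t \<le> T then Some (hv a m t) else None)"

lemma piter_le: "j \<le> k \<Longrightarrow> piter f j v = Some (a j)"
proof -
  assume "j \<le> k"
  then have "piter f j v \<noteq> None"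
  proof (induction rule: inc_induct)
    case base then show ?case by (rule vk)
  next
    case (step n)
    then show ?case by (cases "piter f n v") auto
  qed
  then show ?thesis unfolding a_def by auto
qed

lemma a0: "a 0 = v" unfolding a_def by simp

lemma a_step: "j < k \<Longrightarrow> f (a j) = Some (a (Suc j))"
  using piter_le[of j] piter_le[of "Suc j"] by simp

lemma a_len: "j \<le> k \<Longrightarrow> length (a j) = m"
proof (induction j)
  case 0 then show ?case using a0 lv by simp
next
  case (Suc j)
  then show ?case using rrec_arity[OF f a_step[of j]] by simp
qed

lemma a_dom: "j < k \<Longrightarrow> a j \<in> pdom f" using a_step unfolding pdom_def by auto

lemma hv_len: "length (hv a m t) = 2*m" unfolding hv_def by simp
lemma hv_y: "i < m \<Longrightarrow> hv a m t ! i = Yf a t i" unfolding hv_def by (simp add: nth_append)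
lemma hv_z: "i < m \<Longrightarrow> hv a m t ! (m+i) = Zf a t i" unfolding hv_def by (simp add: nth_append)

lemma map_a: "j \<le> k \<Longrightarrow> map (\<lambda>i. a j ! i) [0..<m] = a j"
  using a_len[of j] by (simp add: list_eq_iff_nth_eq)

lemma T_pos: "T > 0" unfolding T_def using k by simp

lemma j_lt_k: "2*pi*real j \<le> T \<Longrightarrow> j < k"
proof -
  assume "2*pi*real j \<le> T"
  then have "pi * (2*real j) \<le> pi * (2*real k - 1)" unfolding T_def by (simp add: algebra_simps)
  then have "2*real j \<le> 2*real k - 1" by simp
  then show "j < k" by linarith
qed

lemma j1_lt_k: "2*pi*real j + pi < T \<Longrightarrow> Suc j < k"
proof -
  assume "2*pi*real j + pi < T"
  then have "pi * (2*real j + 1) < pi * (2*real k - 1)" unfolding T_def by (simp add: algebra_simps)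
  then have "2*real j + 1 < 2*real k - 1" by simp
  then show "Suc j < k" by linarith
qed

lemma dom_arg: assumes "0 \<le> \<sigma>" "\<sigma> \<le> T" shows "argv m (v @ [\<sigma>] @ hv a m \<sigma>) \<in> pdom f"
proof -
  define j where "j = jt \<sigma>"
  have jb: "2*pi*real j \<le> \<sigma>" "\<sigma> < 2*pi*real j + 2*pi" using jt_bounds[OF assms(1)] unfolding j_def by auto
  have ae: "argv m (v @ [\<sigma>] @ hv a m \<sigma>) = map (\<lambda>i. sel \<sigma> * Yf a \<sigma> i + (1 - sel \<sigma>) * Zf a \<sigma> i) [0..<m]"
    using argv_eq[OF lv hv_len] hv_y hv_z by simp
  show ?thesis
  proof (cases "\<sigma> \<le> 2*pi*real j + pi")
    case True
    have jk: "j < k" using jb assms(2) by (intro j_lt_k) linarith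
    have "sel \<sigma> = 1" by (rule sel_one, rule phA'[of j]) (use jb True in auto)
    then have "argv m (v @ [\<sigma>] @ hv a m \<sigma>) = a j" using ae YZ_A[OF jb(1) True] map_a[of j] jk by simp
    then show ?thesis using a_dom[OF jk] by simp
  next
    case False
    have jk: "Suc j < k" using False assms(2) by (intro j1_lt_k) linarith
    have "sel \<sigma> = 0" by (rule sel_zero, rule phB[of j]) (use jb False in auto)
    then have "argv m (v @ [\<sigma>] @ hv a m \<sigma>) = a (Suc j)" using ae YZ_B[of j \<sigma>] jb False map_a[of "Suc j"] jk by simp
    then show ?thesis using a_dom[OF jk] by simp
  qed
qed

definition Phi :: "nat \<Rightarrow> real \<Rightarrow> real" where
  "Phi i \<sigma> = the (G (v @ [\<sigma>] @ hv a m \<sigma>)) ! i"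

lemma Phi_gv: assumes "0 \<le> \<sigma>" "\<sigma> \<le> T" "i < 2*m" shows "Phi i \<sigma> = gv f m (v @ [\<sigma>] @ hv a m \<sigma>) i"
proof -
  have "G (v @ [\<sigma>] @ hv a m \<sigma>) \<noteq> None" using Gd dom_arg[OF assms(1,2)] xs_nth(4)[OF lv hv_len] by auto
  then obtain ys where "G (v @ [\<sigma>] @ hv a m \<sigma>) = Some ys" by auto
  then show ?thesis unfolding Phi_def using Gv assms(3) by simp
qed


lemma argA: assumes "j < k" "2*pi*real j \<le> x" "x \<le> 2*pi*real j + pi"
  shows "argv m (v @ [x] @ hv a m x) = a j"
proof -
  have ae: "argv m (v @ [x] @ hv a m x) = map (\<lambda>i. sel x * Yf a x i + (1 - sel x) * Zf a x i) [0..<m]"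
    using argv_eq[OF lv hv_len] hv_y hv_z by simp
  have "sel x = 1" by (rule sel_one, rule phA'[of j]) (use assms in auto)
  then show ?thesis using ae YZ_A[OF assms(2,3)] map_a[of j] assms(1) by simp
qed

lemma argB: assumes "Suc j \<le> k" "2*pi*real j + pi < x" "x < 2*pi*real j + 2*pi"
  shows "argv m (v @ [x] @ hv a m x) = a (Suc j)"
proof -
  have ae: "argv m (v @ [x] @ hv a m x) = map (\<lambda>i. sel x * Yf a x i + (1 - sel x) * Zf a x i) [0..<m]"
    using argv_eq[OF lv hv_len] hv_y hv_z by simp
  have "sel x = 0" by (rule sel_zero, rule phB[of j]) (use assms in auto)
  then show ?thesis using ae YZ_B[of j x] assms map_a[of "Suc j"] by simp
qed

lemma TA: "j < k \<Longrightarrow> 2*pi*real j + pi \<le> T"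
proof -
  assume "j < k"
  then have "real j \<le> real k - 1" by linarith
  then have "pi * (2*real j + 1) \<le> pi * (2*real k - 1)" by (intro mult_left_mono) auto
  then show ?thesis unfolding T_def by (simp add: algebra_simps)
qed

lemma TB: "Suc j < k \<Longrightarrow> 2*pi*real j + 2*pi \<le> T"
proof -
  assume "Suc j < k"
  then have "2*pi*real (Suc j) + pi \<le> T" by (rule TA)
  moreover have "2*pi*real j + 2*pi \<le> 2*pi*real (Suc j) + pi" by (simp add: algebra_simps)
  ultimately show ?thesis by linarith
qed

lemma EA: assumes jk: "j < k" and t: "2*pi*real j \<le> t" "t \<le> 2*pi*real j + pi" and i: "i < 2*m"
  shows "(Phi i has_integral (hv a m t ! i - hv a m (2*pi*real j) ! i)) {2*pi*real j..t}"
proof -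
  define s where "s = 2*pi*real j"
  have s0: "0 \<le> s" unfolding s_def by simp
  have sT: "s + pi \<le> T" using TA[OF jk] unfolding s_def by simp
  define P where "P \<sigma> = (if i < m then a j ! i else a (Suc j) ! (i-m) + (a j ! (i-m) - a (Suc j) ! (i-m)) * (1 + cos \<sigma>) / 2)" for \<sigma>
  define P' where "P' \<sigma> = (if i < m then 0 else (a j ! (i-m) - a (Suc j) ! (i-m)) * (- sin \<sigma>) / 2)" for \<sigma>
  have hP: "hv a m \<sigma> ! i = P \<sigma>" if "s \<le> \<sigma>" "\<sigma> \<le> s + pi" for \<sigma>
  proof (cases "i < m")
    case True then show ?thesis using hv_y YZ_A[of j \<sigma>] that unfolding P_def s_def by simp
  next
    case False
    then have "i = m + (i - m)" "i - m < m" using i by auto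
    then show ?thesis using hv_z[of "i-m" \<sigma>] YZ_A[of j \<sigma>] that False unfolding P_def s_def by simp
  qed
  have dP: "(P has_real_derivative P' x) (at x)" for x
    unfolding P_def P'_def by (cases "i < m") (auto intro!: derivative_eq_intros)
  have PhiP: "Phi i x = P' x" if x: "s < x" "x < s + pi" for x
  proof -
    have sx: "sin x > 0" by (rule phA[of j]) (use x in \<open>auto simp: s_def\<close>)
    have g: "Phi i x = gv f m (v @ [x] @ hv a m x) i" by (rule Phi_gv) (use x s0 sT i in auto)
    show ?thesis
    proof (cases "i < m")
      case True
      then show ?thesis using g gv_y[OF lv hv_len True] aB_zero[of x] sx unfolding P'_def by simp
    next
      case False
      define i' where "i' = i - m"
      have ii: "i = m + i'" "i' < m" using False i unfolding i'_def by auto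
      have ar: "argv m (v @ [x] @ hv a m x) = a j" by (rule argA[OF jk]) (use x in \<open>auto simp: s_def\<close>)
      have z: "hv a m x ! (m + i') = a (Suc j) ! i' + (a j ! i' - a (Suc j) ! i') * (1 + cos x) / 2"
        using hv_z[OF ii(2)] YZ_A[of j x] x unfolding s_def by simp
      have c: "1 + cos x \<noteq> 0" using cosA[OF sx] by simp
      have "Phi i x = aA x * (a (Suc j) ! i' - hv a m x ! (m + i'))"
        using g gv_z[OF lv hv_len ii(2)] ar a_step[OF jk] ii by simp
      also have "\<dots> = (a j ! i' - a (Suc j) ! i') * (- sin x) / 2"
        unfolding z aA_pos[OF sx] using c by (simp add: field_simps)
      finally show ?thesis unfolding P'_def using False ii by simp
    qed
  qed
  have "((\<lambda>\<sigma>. hv a m \<sigma> ! i) has_vector_derivative Phi i x) (at x)" if x: "x \<in> {s<..<t}" for x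
  proof -
    have "((\<lambda>\<sigma>. hv a m \<sigma> ! i) has_real_derivative P' x) (at x)"
      by (rule has_field_derivative_transform_within_open[OF dP, of "{s<..<s+pi}"]) (use x t hP in \<open>auto simp: s_def\<close>)
    then show ?thesis using PhiP[of x] x t unfolding s_def by (simp add: has_real_derivative_iff_has_vector_derivative)
  qed
  moreover have "continuous_on {s..t} (\<lambda>\<sigma>. hv a m \<sigma> ! i)"
  proof (rule continuous_on_eq)
    show "continuous_on {s..t} P" unfolding P_def by (cases "i < m") (auto intro!: continuous_intros)
    show "\<And>x. x \<in> {s..t} \<Longrightarrow> P x = hv a m x ! i" using hP t unfolding s_def by auto
  qed
  ultimately show ?thesis using fundamental_theorem_of_calculus_interior[of s t] t unfolding s_def by auto
qed

lemma EB: assumes jk: "Suc j < k" and t: "2*pi*real j + pi \<le> t" "t \<le> 2*pi*real j + 2*pi" and i: "i < 2*m"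
  shows "(Phi i has_integral (hv a m t ! i - hv a m (2*pi*real j + pi) ! i)) {2*pi*real j + pi..t}"
proof -
  define s where "s = 2*pi*real j + pi"
  have s0: "0 \<le> s" unfolding s_def by simp
  have sT: "s + pi \<le> T" using TB[OF jk] unfolding s_def by simp
  define P where "P \<sigma> = (if i < m then a (Suc j) ! i + (a j ! i - a (Suc j) ! i) * (1 - cos \<sigma>) / 2 else a (Suc j) ! (i-m))" for \<sigma>
  define P' where "P' \<sigma> = (if i < m then (a j ! i - a (Suc j) ! i) * sin \<sigma> / 2 else 0)" for \<sigma>
  have hP: "hv a m \<sigma> ! i = P \<sigma>" if "s \<le> \<sigma>" "\<sigma> \<le> s + pi" for \<sigma>
  proof (cases "i < m")
    case True then show ?thesis using hv_y YZ_B[of j \<sigma>] that unfolding P_def s_def by simp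
  next
    case False
    then have "i = m + (i - m)" "i - m < m" using i by auto
    then show ?thesis using hv_z[of "i-m" \<sigma>] YZ_B[of j \<sigma>] that False unfolding P_def s_def by simp
  qed
  have dP: "(P has_real_derivative P' x) (at x)" for x
    unfolding P_def P'_def by (cases "i < m") (auto intro!: derivative_eq_intros)
  have PhiP: "Phi i x = P' x" if x: "s < x" "x < s + pi" for x
  proof -
    have sx: "sin x < 0" by (rule phB[of j]) (use x in \<open>auto simp: s_def\<close>)
    have g: "Phi i x = gv f m (v @ [x] @ hv a m x) i" by (rule Phi_gv) (use x s0 sT i in auto)
    show ?thesis
    proof (cases "i < m")
      case True
      have y: "hv a m x ! i = a (Suc j) ! i + (a j ! i - a (Suc j) ! i) * (1 - cos x) / 2"
        using hv_y[OF True] YZ_B[of j x] x unfolding s_def by simp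
      have z: "hv a m x ! (m + i) = a (Suc j) ! i" using hv_z[OF True] YZ_B[of j x] x unfolding s_def by simp
      have c: "1 - cos x \<noteq> 0" using cosB[OF sx] by simp
      have "Phi i x = aB x * (hv a m x ! (m + i) - hv a m x ! i)" using g gv_y[OF lv hv_len True] by simp
      also have "\<dots> = (a j ! i - a (Suc j) ! i) * sin x / 2"
        unfolding y z aB_neg[OF sx] using c by (simp add: field_simps)
      finally show ?thesis unfolding P'_def using True by simp
    next
      case False
      define i' where "i' = i - m"
      have ii: "i = m + i'" "i' < m" using False i unfolding i'_def by auto
      show ?thesis using g gv_z[OF lv hv_len ii(2)] aA_zero[of x] sx ii False unfolding P'_def by simp
    qed
  qed
  have "((\<lambda>\<sigma>. hv a m \<sigma> ! i) has_vector_derivative Phi i x) (at x)" if x: "x \<in> {s<..<t}" for x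
  proof -
    have "((\<lambda>\<sigma>. hv a m \<sigma> ! i) has_real_derivative P' x) (at x)"
      by (rule has_field_derivative_transform_within_open[OF dP, of "{s<..<s+pi}"]) (use x t hP in \<open>auto simp: s_def\<close>)
    then show ?thesis using PhiP[of x] x t unfolding s_def by (simp add: has_real_derivative_iff_has_vector_derivative)
  qed
  moreover have "continuous_on {s..t} (\<lambda>\<sigma>. hv a m \<sigma> ! i)"
  proof (rule continuous_on_eq)
    show "continuous_on {s..t} P" unfolding P_def by (cases "i < m") (auto intro!: continuous_intros)
    show "\<And>x. x \<in> {s..t} \<Longrightarrow> P x = hv a m x ! i" using hP t unfolding s_def by auto
  qed
  ultimately show ?thesis using fundamental_theorem_of_calculus_interior[of s t] t unfolding s_def by auto
qed


lemma hv0: "hv a m 0 = v @ v"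
proof -
  have y: "map (Yf a 0) [0..<m] = v"
  proof -
    have "map (Yf a 0) [0..<m] = map (\<lambda>i. a 0 ! i) [0..<m]" by (intro map_cong refl) (simp add: YZ_A(1)[of 0 0])
    also have "\<dots> = a 0" by (rule map_a) simp
    finally show ?thesis using a0 by simp
  qed
  have z: "map (Zf a 0) [0..<m] = v"
  proof -
    have "map (Zf a 0) [0..<m] = map (\<lambda>i. a 0 ! i) [0..<m]" by (intro map_cong refl) (simp add: YZ_A(2)[of 0 0] field_simps)
    also have "\<dots> = a 0" by (rule map_a) simp
    finally show ?thesis using a0 by simp
  qed
  show ?thesis unfolding hv_def y z ..
qed

lemma dom_hh: "dom hh = {0..T}" unfolding hh_def dom_def by auto

lemma Ex: "\<forall>t\<in>{0..min T (2*pi*real j)}. \<forall>i<2*m. (Phi i has_integral (hv a m t ! i - hv a m 0 ! i)) {0..t}"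
proof (induction j)
  case 0
  then show ?case by (auto simp: has_integral_refl)
next
  case (Suc j)
  show ?case
  proof (intro ballI allI impI)
    fix t i assume t: "t \<in> {0..min T (2*pi*real (Suc j))}" and i: "i < 2*m"
    define s where "s = 2*pi*real j"
    have sS: "2*pi*real (Suc j) = s + 2*pi" unfolding s_def by (simp add: algebra_simps)
    show "(Phi i has_integral (hv a m t ! i - hv a m 0 ! i)) {0..t}"
    proof (cases "t \<le> s")
      case True
      then show ?thesis using Suc.IH t i unfolding s_def by auto
    next
      case False
      have sT: "s \<le> T" using False t by auto
      have jk: "j < k" using j_lt_k sT unfolding s_def by simp
      have I0: "(Phi i has_integral (hv a m s ! i - hv a m 0 ! i)) {0..s}"
        using Suc.IH i sT unfolding s_def by auto
      show ?thesis
      proof (cases "t \<le> s + pi")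
        case True
        have "(Phi i has_integral (hv a m t ! i - hv a m s ! i)) {s..t}"
          using EA[OF jk _ _ i, of t] True False unfolding s_def by auto
        from has_integral_combine[OF _ _ I0 this] False show ?thesis unfolding s_def by simp
      next
        case False2: False
        have jk1: "Suc j < k" using j1_lt_k[of j] False2 t unfolding s_def by auto
        have "(Phi i has_integral (hv a m (s+pi) ! i - hv a m s ! i)) {s..s+pi}"
          using EA[OF jk _ _ i, of "s+pi"] unfolding s_def by auto
        from has_integral_combine[OF _ _ I0 this] have I1: "(Phi i has_integral (hv a m (s+pi) ! i - hv a m 0 ! i)) {0..s+pi}"
          unfolding s_def by simp
        have "(Phi i has_integral (hv a m t ! i - hv a m (s+pi) ! i)) {s+pi..t}"
          using EB[OF jk1 _ _ i, of t] False2 t sS unfolding s_def by auto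
        from has_integral_combine[OF _ _ I1 this] False2 show ?thesis unfolding s_def by simp
      qed
    qed
  qed
qed

lemma hh_in: "hh \<in> PR_H (2*m) F0 G v"
  unfolding PR_H_def
proof (intro CollectI conjI ballI allI impI)
  show "dom hh = {} \<or> is_interval (dom hh) \<and> 0 \<in> dom hh" using T_pos unfolding dom_hh by (auto simp: is_interval_1)
  show "v \<in> pdom F0" using F0 by (simp add: pdom_def)
  fix \<tau> assume "\<tau> \<in> dom hh"
  then have t: "0 \<le> \<tau>" "\<tau> \<le> T" unfolding dom_hh by auto
  then show "length (the (hh \<tau>)) = 2*m" unfolding hh_def using hv_len by simp
  show "v @ [\<tau>] @ the (hh \<tau>) \<in> pdom G"
    using Gd[OF xs_nth(4)[OF lv hv_len] dom_arg[OF t]] t unfolding hh_def pdom_def by simp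
next
  fix t i assume t: "t \<in> dom hh" and i: "i < 2*m"
  then have t': "0 \<le> t" "t \<le> T" unfolding dom_hh by auto
  have Tk: "T \<le> 2*pi*real k" unfolding T_def by (simp add: algebra_simps)
  have "(Phi i has_integral (hv a m t ! i - hv a m 0 ! i)) {0..t}" using Ex[of k] t' Tk i by auto
  moreover have "((\<lambda>\<tau>. the (G (v @ [\<tau>] @ the (hh \<tau>))) ! i) has_integral X) {0..t} = (Phi i has_integral X) {0..t}" for X
    by (rule has_integral_cong) (use t' in \<open>auto simp: hh_def Phi_def\<close>)
  ultimately show "0 \<le> t \<Longrightarrow> ((\<lambda>\<tau>. the (G (v @ [\<tau>] @ the (hh \<tau>))) ! i) has_integral (the (hh t) ! i - the (F0 v) ! i)) {0..t}"
    using t' F0 hv0 unfolding hh_def by simp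
  show "t < 0 \<Longrightarrow> ((\<lambda>\<tau>. the (G (v @ [\<tau>] @ the (hh \<tau>))) ! i) has_integral (the (F0 v) ! i - the (hh t) ! i)) {t..0}"
    using t' by simp
qed


lemma UA:
  fixes W :: "real \<Rightarrow> real list" and Ps :: "nat \<Rightarrow> real \<Rightarrow> real"
  assumes jk: "j < k" and se: "2*pi*real j \<le> e'" "e' \<le> 2*pi*real j + pi"
    and HW: "\<And>\<sigma>. \<sigma> \<in> {2*pi*real j..e'} \<Longrightarrow> length (W \<sigma>) = 2*m"
    and HI: "\<And>i \<tau>. i < 2*m \<Longrightarrow> \<tau> \<in> {2*pi*real j..e'} \<Longrightarrow> (Ps i has_integral (W \<tau> ! i - W (2*pi*real j) ! i)) {2*pi*real j..\<tau>}"
    and HG: "\<And>i \<sigma>. i < 2*m \<Longrightarrow> \<sigma> \<in> {2*pi*real j..e'} \<Longrightarrow> Ps i \<sigma> = gv f m (v @ [\<sigma>] @ W \<sigma>) i"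
    and H0: "\<And>i. i < 2*m \<Longrightarrow> W (2*pi*real j) ! i = hv a m (2*pi*real j) ! i"
    and i: "i < 2*m" and \<tau>: "\<tau> \<in> {2*pi*real j..e'}"
  shows "W \<tau> ! i = hv a m \<tau> ! i"
proof -
  define s where "s = 2*pi*real j"
  have ys: "W \<sigma> ! i' = a j ! i'" if i': "i' < m" and \<sigma>: "\<sigma> \<in> {s..e'}" for i' \<sigma>
  proof -
    have "W \<sigma> ! i' - W s ! i' = 0"
    proof (rule zero_int)
      show "(Ps i' has_integral (W \<sigma> ! i' - W s ! i')) {s..\<sigma>}" using HI[of i' \<sigma>] i' \<sigma> unfolding s_def by auto
      fix x assume x: "x \<in> {s..\<sigma>}"
      have "sin x \<ge> 0" by (rule phA'[of j]) (use x \<sigma> se in \<open>auto simp: s_def\<close>)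
      then show "Ps i' x = 0" using HG[of i' x] gv_y[OF lv HW i'] x \<sigma> i' aB_zero unfolding s_def by auto
    qed
    moreover have "W s ! i' = a j ! i'" using H0[of i'] i' hv_y[OF i'] YZ_A(1)[of j s] unfolding s_def by simp
    ultimately show ?thesis by simp
  qed
  show ?thesis
  proof (cases "i < m")
    case True
    then show ?thesis using ys[OF True] \<tau> hv_y[OF True] YZ_A(1)[of j \<tau>] se unfolding s_def by auto
  next
    case False
    define i' where "i' = i - m"
    have ii: "i = m + i'" "i' < m" using False i unfolding i'_def by auto
    define e where "e = s + pi"
    define u where "u \<sigma> = W \<sigma> ! (m+i') - a (Suc j) ! i'" for \<sigma>
    define w :: "real \<Rightarrow> real" where "w \<sigma> = (1 + cos \<sigma>) / 2" for \<sigma>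
    have cs: "cos s = 1" unfolding s_def by (rule cos0)
    have ce: "cos e = -1" unfolding e_def s_def by (rule cos1)
    have main: "u \<tau> = u s * w \<tau>"
    proof (rule lin_unique[where \<phi> = "Ps (m+i')" and \<alpha> = aA])
      show "s < e" unfolding e_def by simp
      show "s \<le> e'" "e' \<le> e" using se unfolding s_def e_def by auto
      show "\<forall>\<tau>\<in>{s..e'}. (Ps (m+i') has_integral (u \<tau> - u s)) {s..\<tau>}"
        using HI ii unfolding u_def s_def by auto
      show "Ps (m+i') \<sigma> = - aA \<sigma> * u \<sigma>" if "s < \<sigma>" "\<sigma> < e" "\<sigma> \<le> e'" for \<sigma>
      proof -
        have \<sigma>: "\<sigma> \<in> {s..e'}" using that by auto
        have "sel \<sigma> = 1" by (rule sel_one, rule phA'[of j]) (use that in \<open>auto simp: s_def e_def\<close>)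
        then have "argv m (v @ [\<sigma>] @ W \<sigma>) = map (\<lambda>i. W \<sigma> ! i) [0..<m]" using argv_eq[OF lv HW[OF \<sigma>[unfolded s_def]]] by simp
        also have "\<dots> = map (\<lambda>i. a j ! i) [0..<m]" using ys \<sigma> by simp
        also have "\<dots> = a j" using map_a jk by simp
        finally have ar: "argv m (v @ [\<sigma>] @ W \<sigma>) = a j" .
        have "Ps (m+i') \<sigma> = aA \<sigma> * (the (f (a j)) ! i' - W \<sigma> ! (m+i'))"
          using HG[of "m+i'" \<sigma>] gv_z[OF lv HW[OF \<sigma>[unfolded s_def]] ii(2)] ar ii \<sigma> unfolding s_def by simp
        then show ?thesis using a_step[OF jk] unfolding u_def by (simp add: algebra_simps)
      qed
      show "continuous_on {s<..<e} aA"
      proof (rule continuous_on_eq)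
        show "continuous_on {s<..<e} (\<lambda>x. sin x / (1 + cos x))"
        proof -
          have "1 + cos x \<noteq> 0" if "x \<in> {s<..<e}" for x
          proof -
            have "sin x > 0" using that by (intro phA[of j]) (auto simp: s_def e_def)
            then show ?thesis using cosA by fastforce
          qed
          then show ?thesis by (auto intro!: continuous_intros)
        qed
        fix x assume "x \<in> {s<..<e}"
        then have "sin x > 0" by (intro phA[of j]) (auto simp: s_def e_def)
        then show "sin x / (1 + cos x) = aA x" by (simp add: aA_pos)
      qed
      show "continuous_on {s..e} w" unfolding w_def by (intro continuous_intros) auto
      show "w s = 1" "w e = 0" unfolding w_def using cs ce by auto
      show "w \<sigma> > 0" if "s \<le> \<sigma>" "\<sigma> < e" for \<sigma>
      proof (cases "\<sigma> = s")
        case True then show ?thesis using cs unfolding w_def by simp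
      next
        case False
        then have "sin \<sigma> > 0" using that by (intro phA[of j]) (auto simp: s_def e_def)
        then show ?thesis using cosA unfolding w_def by fastforce
      qed
      show "(w has_real_derivative (- aA \<sigma> * w \<sigma>)) (at \<sigma>)" if "s < \<sigma>" "\<sigma> < e" for \<sigma>
      proof -
        have sp: "sin \<sigma> > 0" using that by (intro phA[of j]) (auto simp: s_def e_def)
        have "(w has_real_derivative (- sin \<sigma> / 2)) (at \<sigma>)" unfolding w_def by (auto intro!: derivative_eq_intros)
        moreover have "- sin \<sigma> / 2 = - aA \<sigma> * w \<sigma>" using cosA[OF sp] unfolding w_def aA_pos[OF sp] by (simp add: field_simps)
        ultimately show ?thesis by simp
      qed
      show "s \<le> \<tau>" "\<tau> \<le> e'" using \<tau> unfolding s_def by auto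
    qed
    have us: "u s = a j ! i' - a (Suc j) ! i'"
      using H0[of "m+i'"] ii hv_z[OF ii(2)] YZ_A(2)[of j s] cs unfolding u_def s_def by simp
    have "hv a m \<tau> ! i = a (Suc j) ! i' + (a j ! i' - a (Suc j) ! i') * (1 + cos \<tau>) / 2"
      using hv_z[OF ii(2)] YZ_A(2)[of j \<tau>] \<tau> se ii unfolding s_def by auto
    moreover have "W \<tau> ! i = a (Suc j) ! i' + (a j ! i' - a (Suc j) ! i') * ((1 + cos \<tau>) / 2)"
      using main us ii unfolding u_def w_def by (simp add: eq_diff_eq)
    ultimately show ?thesis by simp
  qed
qed

lemma UB:
  fixes W :: "real \<Rightarrow> real list" and Ps :: "nat \<Rightarrow> real \<Rightarrow> real"
  assumes jk: "Suc j < k" and se: "2*pi*real j + pi \<le> e'" "e' \<le> 2*pi*real j + 2*pi"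
    and HW: "\<And>\<sigma>. \<sigma> \<in> {2*pi*real j + pi..e'} \<Longrightarrow> length (W \<sigma>) = 2*m"
    and HI: "\<And>i \<tau>. i < 2*m \<Longrightarrow> \<tau> \<in> {2*pi*real j + pi..e'} \<Longrightarrow> (Ps i has_integral (W \<tau> ! i - W (2*pi*real j + pi) ! i)) {2*pi*real j + pi..\<tau>}"
    and HG: "\<And>i \<sigma>. i < 2*m \<Longrightarrow> \<sigma> \<in> {2*pi*real j + pi..e'} \<Longrightarrow> Ps i \<sigma> = gv f m (v @ [\<sigma>] @ W \<sigma>) i"
    and H0: "\<And>i. i < 2*m \<Longrightarrow> W (2*pi*real j + pi) ! i = hv a m (2*pi*real j + pi) ! i"
    and i: "i < 2*m" and \<tau>: "\<tau> \<in> {2*pi*real j + pi..e'}"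
  shows "W \<tau> ! i = hv a m \<tau> ! i"
proof -
  define s where "s = 2*pi*real j + pi"
  have cs: "cos s = -1" unfolding s_def by (rule cos1)
  have zs: "W \<sigma> ! (m+i') = a (Suc j) ! i'" if i': "i' < m" and \<sigma>: "\<sigma> \<in> {s..e'}" for i' \<sigma>
  proof -
    have "W \<sigma> ! (m+i') - W s ! (m+i') = 0"
    proof (rule zero_int)
      show "(Ps (m+i') has_integral (W \<sigma> ! (m+i') - W s ! (m+i'))) {s..\<sigma>}" using HI[of "m+i'" \<sigma>] i' \<sigma> unfolding s_def by auto
      fix x assume x: "x \<in> {s..\<sigma>}"
      have "sin x \<le> 0" by (rule phB'[of j]) (use x \<sigma> se in \<open>auto simp: s_def\<close>)
      then show "Ps (m+i') x = 0" using HG[of "m+i'" x] gv_z[OF lv HW i'] x \<sigma> i' aA_zero unfolding s_def by auto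
    qed
    moreover have "W s ! (m+i') = a (Suc j) ! i'" using H0[of "m+i'"] i' hv_z[OF i'] YZ_B(2)[of j s] unfolding s_def by simp
    ultimately show ?thesis by simp
  qed
  show ?thesis
  proof (cases "i < m")
    case False
    define i' where "i' = i - m"
    have ii: "i = m + i'" "i' < m" using False i unfolding i'_def by auto
    then show ?thesis using zs[OF ii(2)] \<tau> hv_z[OF ii(2)] YZ_B(2)[of j \<tau>] se unfolding s_def by auto
  next
    case True
    define e where "e = s + pi"
    define u where "u \<sigma> = W \<sigma> ! i - a (Suc j) ! i" for \<sigma>
    define w :: "real \<Rightarrow> real" where "w \<sigma> = (1 - cos \<sigma>) / 2" for \<sigma>
    have ce: "cos e = 1" unfolding e_def s_def using cos2[of j] by (simp add: algebra_simps)
    have main: "u \<tau> = u s * w \<tau>"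
    proof (rule lin_unique[where \<phi> = "Ps i" and \<alpha> = aB])
      show "s < e" unfolding e_def by simp
      show "s \<le> e'" "e' \<le> e" using se unfolding s_def e_def by auto
      show "\<forall>\<tau>\<in>{s..e'}. (Ps i has_integral (u \<tau> - u s)) {s..\<tau>}"
        using HI i unfolding u_def s_def by auto
      show "Ps i \<sigma> = - aB \<sigma> * u \<sigma>" if "s < \<sigma>" "\<sigma> < e" "\<sigma> \<le> e'" for \<sigma>
      proof -
        have \<sigma>: "\<sigma> \<in> {s..e'}" using that by auto
        have "Ps i \<sigma> = aB \<sigma> * (W \<sigma> ! (m+i) - W \<sigma> ! i)"
          using HG[of i \<sigma>] gv_y[OF lv HW[OF \<sigma>[unfolded s_def]] True] i \<sigma> unfolding s_def by simp
        then show ?thesis using zs[OF True \<sigma>] unfolding u_def by (simp add: algebra_simps)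
      qed
      show "continuous_on {s<..<e} aB"
      proof (rule continuous_on_eq)
        show "continuous_on {s<..<e} (\<lambda>x. - sin x / (1 - cos x))"
        proof -
          have "1 - cos x \<noteq> 0" if "x \<in> {s<..<e}" for x
          proof -
            have "sin x < 0" using that by (intro phB[of j]) (auto simp: s_def e_def)
            then show ?thesis using cosB by fastforce
          qed
          then show ?thesis by (auto intro!: continuous_intros)
        qed
        fix x assume "x \<in> {s<..<e}"
        then have "sin x < 0" by (intro phB[of j]) (auto simp: s_def e_def)
        then show "- sin x / (1 - cos x) = aB x" by (simp add: aB_neg)
      qed
      show "continuous_on {s..e} w" unfolding w_def by (intro continuous_intros) auto
      show "w s = 1" "w e = 0" unfolding w_def using cs ce by auto
      show "w \<sigma> > 0" if "s \<le> \<sigma>" "\<sigma> < e" for \<sigma>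
      proof (cases "\<sigma> = s")
        case True then show ?thesis using cs unfolding w_def by simp
      next
        case False
        then have "sin \<sigma> < 0" using that by (intro phB[of j]) (auto simp: s_def e_def)
        then show ?thesis using cosB unfolding w_def by fastforce
      qed
      show "(w has_real_derivative (- aB \<sigma> * w \<sigma>)) (at \<sigma>)" if "s < \<sigma>" "\<sigma> < e" for \<sigma>
      proof -
        have sp: "sin \<sigma> < 0" using that by (intro phB[of j]) (auto simp: s_def e_def)
        have "(w has_real_derivative (sin \<sigma> / 2)) (at \<sigma>)" unfolding w_def by (auto intro!: derivative_eq_intros)
        moreover have "sin \<sigma> / 2 = - aB \<sigma> * w \<sigma>" using cosB[OF sp] unfolding w_def aB_neg[OF sp] by (simp add: field_simps)
        ultimately show ?thesis by simp
      qed
      show "s \<le> \<tau>" "\<tau> \<le> e'" using \<tau> unfolding s_def by auto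
    qed
    have us: "u s = a j ! i - a (Suc j) ! i"
      using H0[of i] i hv_y[OF True] YZ_B(1)[of j s] cs unfolding u_def s_def by simp
    have "hv a m \<tau> ! i = a (Suc j) ! i + (a j ! i - a (Suc j) ! i) * (1 - cos \<tau>) / 2"
      using hv_y[OF True] YZ_B(1)[of j \<tau>] \<tau> se unfolding s_def by auto
    moreover have "W \<tau> ! i = a (Suc j) ! i + (a j ! i - a (Suc j) ! i) * ((1 - cos \<tau>) / 2)"
      using main us unfolding u_def w_def by (simp add: eq_diff_eq)
    ultimately show ?thesis by simp
  qed
qed


lemma uniq:
  assumes h': "h' \<in> PR_H (2*m) F0 G v" and t1: "t1 \<in> dom h'" "0 \<le> t1" "t1 \<le> T"
  shows "h' t1 = hh t1"
proof -
  have sub: "\<tau> \<in> dom h'" if "\<tau> \<in> {0..t1}" for \<tau> using H_interval[OF h' t1(1)] that by auto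
  define W where "W \<tau> = the (h' \<tau>)" for \<tau>
  define Ps where "Ps i \<tau> = the (G (v @ [\<tau>] @ W \<tau>)) ! i" for i \<tau>
  have len: "length (W \<tau>) = 2*m" if "\<tau> \<in> {0..t1}" for \<tau> using h' sub[OF that] unfolding PR_H_def W_def by auto
  have Pgv: "Ps i \<tau> = gv f m (v @ [\<tau>] @ W \<tau>) i" if "i < 2*m" "\<tau> \<in> {0..t1}" for i \<tau>
  proof -
    have "v @ [\<tau>] @ W \<tau> \<in> pdom G" using h' sub[OF that(2)] unfolding PR_H_def W_def by auto
    then obtain ys where "G (v @ [\<tau>] @ W \<tau>) = Some ys" unfolding pdom_def by auto
    then show ?thesis unfolding Ps_def using Gv that(1) by simp
  qed
  have IU: "(\<forall>\<tau>\<in>{0..t1}. (Ps i has_integral (W \<tau> ! i - W 0 ! i)) {0..\<tau>}) \<and> W 0 ! i = hv a m 0 ! i" if i: "i < 2*m" for i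
  proof -
    have c: "(0 \<le> \<tau> \<longrightarrow> (Ps i has_integral (W \<tau> ! i - (v@v) ! i)) {0..\<tau>}) \<and> (\<tau> < 0 \<longrightarrow> (Ps i has_integral ((v@v) ! i - W \<tau> ! i)) {\<tau>..0})"
      if "\<tau> \<in> {0..t1}" for \<tau>
      using H_comp[OF h' sub[OF that] i, of "Ps i"] F0 unfolding Ps_def W_def by simp
    have "0 \<le> (0::real)" by simp
    note Hu = H_uniform[of 0 t1 "Ps i" "\<lambda>\<tau>. W \<tau> ! i" "(v@v) ! i", OF this t1(2) c]
    then show ?thesis using hv0 by simp
  qed
  have Un: "\<forall>\<tau>\<in>{0..min t1 (2*pi*real j)}. \<forall>i<2*m. W \<tau> ! i = hv a m \<tau> ! i" for j
  proof (induction j)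
    case 0 then show ?case using IU by auto
  next
    case (Suc j)
    show ?case
    proof (intro ballI allI impI)
      fix \<tau> i assume \<tau>: "\<tau> \<in> {0..min t1 (2*pi*real (Suc j))}" and i: "i < 2*m"
      define s where "s = 2*pi*real j"
      have sS: "2*pi*real (Suc j) = s + 2*pi" unfolding s_def by (simp add: algebra_simps)
      show "W \<tau> ! i = hv a m \<tau> ! i"
      proof (cases "\<tau> \<le> s")
        case True then show ?thesis using Suc.IH \<tau> i unfolding s_def by auto
      next
        case False
        have st: "s \<le> t1" using False \<tau> by auto
        have s0: "0 \<le> 2*pi*real j" by simp
        have inr: "\<sigma> \<in> {0..t1}" if "2*pi*real j \<le> \<sigma>" "\<sigma> \<le> t1" for \<sigma>
          using s0 that by (meson atLeastAtMost_iff order_trans)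
        have jk: "j < k" using j_lt_k[of j] st t1 unfolding s_def by linarith
        have H0: "W s ! i = hv a m s ! i" if "i < 2*m" for i using Suc.IH st that unfolding s_def by auto
        have HI: "(Ps i has_integral (W \<tau>' ! i - W c ! i)) {c..\<tau>'}" if "i < 2*m" "c \<in> {0..t1}" "\<tau>' \<in> {c..t1}" for i c \<tau>'
          using int_shift[OF conjunct1[OF IU[OF that(1)]] that(2)] that(3) by auto
        define e' where "e' = min t1 (s + pi)"
        have A: "W \<tau>' ! i = hv a m \<tau>' ! i" if "i < 2*m" "\<tau>' \<in> {s..e'}" for i \<tau>'
        proof (rule UA[OF jk, of e' W Ps])
          show "2*pi*real j \<le> e'" "e' \<le> 2*pi*real j + pi" using st unfolding e'_def s_def by auto
          show "length (W \<sigma>) = 2*m" if "\<sigma> \<in> {2*pi*real j..e'}" for \<sigma>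
            using len[OF inr] that st unfolding e'_def s_def by auto
          show "(Ps i has_integral (W \<tau> ! i - W (2*pi*real j) ! i)) {2*pi*real j..\<tau>}"
            if "i < 2*m" "\<tau> \<in> {2*pi*real j..e'}" for i \<tau>
            using HI[of i s \<tau>, OF _ inr] that st unfolding e'_def s_def by auto
          show "Ps i \<sigma> = gv f m (v @ [\<sigma>] @ W \<sigma>) i" if "i < 2*m" "\<sigma> \<in> {2*pi*real j..e'}" for i \<sigma>
            using Pgv[OF _ inr] that st unfolding e'_def s_def by auto
          show "W (2*pi*real j) ! i = hv a m (2*pi*real j) ! i" if "i < 2*m" for i using H0 that unfolding s_def by auto
        qed (use that in \<open>auto simp: s_def\<close>)
        show ?thesis
        proof (cases "\<tau> \<le> s + pi")
          case True then show ?thesis using A[OF i] \<tau> False unfolding e'_def by auto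
        next
          case False2: False
          have jk1: "Suc j < k" using j1_lt_k[of j] False2 \<tau> t1 unfolding s_def by auto
          have s1: "s + pi \<le> t1" using False2 \<tau> by auto
          define e'' where "e'' = min t1 (s + 2*pi)"
          have inr2: "\<sigma> \<in> {0..t1}" if "2*pi*real j + pi \<le> \<sigma>" "\<sigma> \<le> t1" for \<sigma>
            using inr[of \<sigma>] that pi_gt_zero by linarith
          have "W \<tau> ! i = hv a m \<tau> ! i"
          proof (rule UB[OF jk1, of e'' W Ps])
            show "2*pi*real j + pi \<le> e''" "e'' \<le> 2*pi*real j + 2*pi" using s1 unfolding e''_def s_def by auto
            show "length (W \<sigma>) = 2*m" if "\<sigma> \<in> {2*pi*real j + pi..e''}" for \<sigma>
              using len[OF inr2] that s1 unfolding e''_def s_def by auto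
            show "(Ps i has_integral (W \<tau> ! i - W (2*pi*real j + pi) ! i)) {2*pi*real j + pi..\<tau>}"
              if "i < 2*m" "\<tau> \<in> {2*pi*real j + pi..e''}" for i \<tau>
              using HI[of i "s + pi" \<tau>, OF _ inr2] that s1 unfolding e''_def s_def by auto
            show "Ps i \<sigma> = gv f m (v @ [\<sigma>] @ W \<sigma>) i" if "i < 2*m" "\<sigma> \<in> {2*pi*real j + pi..e''}" for i \<sigma>
              using Pgv[OF _ inr2] that s1 unfolding e''_def s_def by auto
            show "W (2*pi*real j + pi) ! i = hv a m (2*pi*real j + pi) ! i" if "i < 2*m" for i
              using A[OF that] s1 unfolding e'_def s_def by auto
          qed (use i \<tau> sS False2 in \<open>auto simp: e''_def s_def\<close>)
          then show ?thesis .
        qed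
      qed
    qed
  qed
  have Tk: "T \<le> 2*pi*real k" unfolding T_def by (simp add: algebra_simps)
  have "\<forall>i<2*m. W t1 ! i = hv a m t1 ! i" using Un[of k] t1 Tk by auto
  then have "W t1 = hv a m t1" using len[of t1] hv_len t1 by (simp add: list_eq_iff_nth_eq)
  then show ?thesis using t1 unfolding W_def hh_def by auto
qed

lemma hh_unique: "unique_in hh (PR_H (2*m) F0 G v)"
  unfolding unique_in_def using hh_in uniq unfolding dom_hh by (metis IntD1 IntD2 atLeastAtMost_iff)

lemma final_val: "PRop m (2*m) F0 G (v @ [T]) = Some (hv a m T)"
  using PRop_eval[OF lv hh_unique, of T] T_pos unfolding dom_hh hh_def by simp

lemma hvT: "drop m (hv a m T) = a k"
proof -
  have kk: "k - 1 < k" "Suc (k - 1) = k" using k by auto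
  have Te: "T = 2*pi*real (k-1) + pi" unfolding T_def using k by (simp add: algebra_simps of_nat_diff)
  have cT: "cos T = -1" unfolding Te by (rule cos1)
  have "map (Zf a T) [0..<m] = map (\<lambda>i. a k ! i) [0..<m]"
    by (intro map_cong refl) (use YZ_A(2)[of "k-1" T] Te cT kk in simp)
  also have "\<dots> = a k" by (rule map_a) simp
  finally show ?thesis unfolding hv_def by simp
qed

end


theorem lemma4p1:
  fixes f :: pfun and m :: nat
  assumes "rrec m m f"
  shows "\<exists>g. rrec (m + 1) m g \<and>
           (\<forall>v (k::nat). length v = m \<and> k \<ge> 1 \<and> v \<in> pdom (piter f k) \<longrightarrow>
              v @ [real k] \<in> pdom g \<and> g (v @ [real k]) = piter f k v)"
proof -
  note f = assms
  obtain G where G: "rrec (3*m+1) (2*m) G"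
    "\<And>xs. length xs = 3*m+1 \<Longrightarrow> argv m xs \<in> pdom f \<Longrightarrow> G xs \<noteq> None"
    "\<And>xs ys i. G xs = Some ys \<Longrightarrow> i < 2*m \<Longrightarrow> ys ! i = gv f m xs i"
    using G_exists[OF f] by blast
  have t0: "tot m (\<lambda>xs. xs ! (if j < m then j else j - m))" if "j < 2*m" for j
    using that by (intro tot_proj) auto
  obtain F0 where F0: "rrec m (2*m) F0" "\<And>xs. length xs = m \<Longrightarrow> F0 xs = Some (map (\<lambda>j. xs ! (if j < m then j else j - m)) [0..<2*m])"
    using tot_vec[of "2*m" m "\<lambda>j xs. xs ! (if j < m then j else j - m)", OF t0] by blast
  have F0v: "F0 xs = Some (xs @ xs)" if "length xs = m" for xs
    using F0(2)[OF that] that by (simp add: list_eq_iff_nth_eq nth_append)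
  define PR where "PR = PRop m (2*m) F0 G"
  have rPR: "rrec (m+1) (2*m) PR" unfolding PR_def
    by (rule rr_PR[OF F0(1)]) (use G(1) in \<open>simp add: algebra_simps\<close>)
  have tJ: "tot (m+1) (if j < m then (\<lambda>xs. xs ! j) else (\<lambda>xs. (2 * xs ! m - 1) * pi))" if "j < m+1" for j
    using that by (cases "j < m") (auto intro!: tot_proj tot_mult tot_diff tot_pi tot_num tot_const)
  obtain J where J: "rrec (m+1) (m+1) J" "\<And>xs. length xs = m+1 \<Longrightarrow> J xs = Some (map (\<lambda>j. (if j < m then (\<lambda>xs. xs ! j) else (\<lambda>xs. (2 * xs ! m - 1) * pi)) xs) [0..<m+1])"
    using tot_vec[of "m+1" "m+1" "\<lambda>j. if j < m then (\<lambda>xs. xs ! j) else (\<lambda>xs. (2 * xs ! m - 1) * pi)", OF tJ] by blast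
  have Jv: "J (v @ [\<kappa>]) = Some (v @ [(2 * \<kappa> - 1) * pi])" if "length v = m" for v \<kappa>
    using J(2)[of "v @ [\<kappa>]"] that by (simp add: list_eq_iff_nth_eq nth_append)
  have tZ: "tot (2*m) (\<lambda>ys. ys ! (m + j))" if "j < m" for j using that by (intro tot_proj) auto
  obtain Z where Z: "rrec (2*m) m Z" "\<And>ys. length ys = 2*m \<Longrightarrow> Z ys = Some (map (\<lambda>j. ys ! (m + j)) [0..<m])"
    using tot_vec[of m "2*m" "\<lambda>j ys. ys ! (m + j)", OF tZ] by blast
  have Zv: "Z ys = Some (drop m ys)" if "length ys = 2*m" for ys
    using Z(2)[OF that] that by (simp add: list_eq_iff_nth_eq)
  define g where "g = pcomp Z (pcomp PR J)"
  have rg: "rrec (m+1) m g" unfolding g_def by (rule rr_comp[OF Z(1) rr_comp[OF rPR J(1)]])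
  show ?thesis
  proof (intro exI conjI allI impI)
    show "rrec (m+1) m g" by (rule rg)
    fix v k assume a: "length v = m \<and> k \<ge> 1 \<and> v \<in> pdom (piter f k)"
    interpret itr f m G F0 v k
      by unfold_locales (use f G F0v a in \<open>auto simp: pdom_def\<close>)
    have TT: "(2 * real k - 1) * pi = T" unfolding T_def ..
    have "g (v @ [real k]) = Some (a k)"
      unfolding g_def using Jv[of v "real k"] a final_val hvT hv_len Zv TT by (simp add: pcomp_def PR_def)
    moreover have "piter f k v = Some (a k)" by (rule piter_le) simp
    ultimately show "v @ [real k] \<in> pdom g" "g (v @ [real k]) = piter f k v" unfolding pdom_def by auto
  qed
qed


end
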